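(* Let $G$ be a finite group of order $n$, $k\ge1$, and write $L_j,L_j^-,L_j^+$ for the Laplacians of $Y_{G,k}$. (i) For $0\le j\le k$, the eigenvalues of $L_j$ on $C^j(Y_{G,k})$ are exactly $\{tn: k-j\le t\le k+1\}$, and the multiplicity of $tn$ is $\binom{k+1}{t}\binom{t}{k-j}(n-1)^{k+1-t}$. (ii) For $0\le j\le k$, the eigenvalues of $L_j^-$ restricted to $\operatorname{im} d_{j-1}$ are exactly $\{tn:k-j+1\le t\le k+1\}$, with multiplicity of $tn$ equal to $\binom{k+1}{t}\binom{t-1}{k-j}(n-1)^{k+1-t}$. For $0\le j\le k-1$, the eigenvalues of $L_j^+$ restricted to $\operatorname{im} d_j^*$ are exactly $\{tn:k-j\le t\le k+1\}$, with multiplicity of $tn$ equal to $\binom{k+1}{t}\binom{t-1}{k-j-1}(n-1)^{k+1-t}$.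
   Context: Let $G$ be a finite group of order $n$ and $k\ge1$. For $1\le i\le k+1$ let $V_i=\{i\}\times G$, viewed as a $0$-dimensional complex. $Y_{G,k}$ denotes the simplicial join $V_1*\cdots*V_{k+1}$, i.e. the simplicial complex on vertex set $V_1\cup\cdots\cup V_{k+1}$ whose simplices are the sets containing at most one vertex from each $V_i$. For a simplicial complex $X$ and $j\ge0$, $C^j(X)$ is the real vector space of real-valued skew-symmetric functions on ordered $j$-simplices, $C^{-1}(X)=\mathbb R$; the coboundary $d_j:C^j\to C^{j+1}$ is $d_j\phi([v_0,\dots,v_{j+1}])=\sum_i(-1)^i\phi([v_0,\dots,\widehat{v_i},\dots,v_{j+1}])$, and $d_{-1}(a)(v)=a$. Each $C^j(X)$ has the standard inner product $(\phi,\psi)_X=\sum_{\sigma\in X(j)}\phi(\sigma)\psi(\sigma)$, and $d_j^*$ denotes the adjoint. The lower and upper Laplacians are $L_j^-=d_{j-1}d_{j-1}^*$ and $L_j^+=d_j^*d_j$ on $C^j(X)$, and $L_j=L_j^-+L_j^+$. Note $L_j^-$ preserves $\operatorname{im} d_{j-1}$ and $L_j^+$ preserves $\operatorname{im} d_j^*$. Binomial coefficients $\binom{a}{b}$ with $b<0$ or $b>a$ are $0$. *)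

theory Defs
  imports Complex_Main "HOL-Algebra.Coset" "HOL-Library.Function_Algebras"
begin

section \<open>The complex Y_{G,k} = V_1 * ... * V_{k+1}, V_i = {i} x G\<close>

type_synonym 'a vtx = "nat \<times> 'a"
type_synonym 'a cochain = "'a vtx set \<Rightarrow> real"

definition join_vertices :: "nat \<Rightarrow> 'a set \<Rightarrow> 'a vtx set" where
  "join_vertices k A = {1..k+1} \<times> A"

text \<open>Faces with m vertices (i.e. (m-1)-simplices) of Y: sets of vertices with at most
  one vertex from each V_i. m = 0 gives the empty face, used for C^{-1}.\<close>
definition faces :: "nat \<Rightarrow> 'a set \<Rightarrow> nat \<Rightarrow> 'a vtx set set" where
  "faces k A m = {S. S \<subseteq> join_vertices k A \<and> card S = m \<and>
      (\<forall>v\<in>S. \<forall>w\<in>S. fst v = fst w \<longrightarrow> v = w)}"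

text \<open>Each simplex is
  identified with its ordered representative listing the vertices by increasing part index
  (a skew-symmetric function is determined by its values on these).  For m = 0 this is
  C^{-1} = R (functions on the empty face).\<close>
definition cochains :: "nat \<Rightarrow> 'a set \<Rightarrow> nat \<Rightarrow> 'a cochain set" where
  "cochains k A m = {f. \<forall>S. S \<notin> faces k A m \<longrightarrow> f S = 0}"

definition vsign :: "'a vtx \<Rightarrow> 'a vtx set \<Rightarrow> real" where
  "vsign v T = (-1) ^ card {w\<in>T. fst w < fst v}"

text \<open>Coboundary d from faces with m vertices to faces with m+1 vertices
  (d_j with m = j+1; m = 0 gives d_{-1}(a)(v) = a).\<close>
definition cobound :: "nat \<Rightarrow> 'a set \<Rightarrow> nat \<Rightarrow> 'a cochain \<Rightarrow> 'a cochain" where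
  "cobound k A m f = (\<lambda>T. if T \<in> faces k A (m+1)
       then (\<Sum>v\<in>T. vsign v T * f (T - {v})) else 0)"

text \<open>Adjoint of cobound w.r.t. the standard inner products (sum over faces).\<close>
definition cobound_adj :: "nat \<Rightarrow> 'a set \<Rightarrow> nat \<Rightarrow> 'a cochain \<Rightarrow> 'a cochain" where
  "cobound_adj k A m g = (\<lambda>S. if S \<in> faces k A m
       then (\<Sum>v\<in>{v\<in>join_vertices k A - S. insert v S \<in> faces k A (m+1)}.
               vsign v (insert v S) * g (insert v S)) else 0)"

text \<open>Laplacians on C^j, j = m - 1 (m \<ge> 1).\<close>
definition lap_down :: "nat \<Rightarrow> 'a set \<Rightarrow> nat \<Rightarrow> 'a cochain \<Rightarrow> 'a cochain" where
  "lap_down k A m f = cobound k A (m-1) (cobound_adj k A (m-1) f)"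

definition lap_up :: "nat \<Rightarrow> 'a set \<Rightarrow> nat \<Rightarrow> 'a cochain \<Rightarrow> 'a cochain" where
  "lap_up k A m f = cobound_adj k A m (cobound k A m f)"

definition lap :: "nat \<Rightarrow> 'a set \<Rightarrow> nat \<Rightarrow> 'a cochain \<Rightarrow> 'a cochain" where
  "lap k A m f = lap_down k A m f + lap_up k A m f"

definition cscale :: "real \<Rightarrow> ('b \<Rightarrow> real) \<Rightarrow> ('b \<Rightarrow> real)" where
  "cscale c f = (\<lambda>x. c * f x)"

definition eigenvalue_on :: "('b \<Rightarrow> real) set \<Rightarrow> (('b \<Rightarrow> real) \<Rightarrow> ('b \<Rightarrow> real)) \<Rightarrow> real \<Rightarrow> bool" where
  "eigenvalue_on W L c \<longleftrightarrow> (\<exists>v\<in>W. v \<noteq> 0 \<and> L v = cscale c v)"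

text \<open>Multiplicity: dimension of the eigenspace inside W (the operators considered are
  self-adjoint, so this equals the algebraic multiplicity).\<close>
definition eig_mult :: "('b \<Rightarrow> real) set \<Rightarrow> (('b \<Rightarrow> real) \<Rightarrow> ('b \<Rightarrow> real)) \<Rightarrow> real \<Rightarrow> nat" where
  "eig_mult W L c = vector_space.dim cscale {v\<in>W. L v = cscale c v}"

end

theory Submission
  imports Defs
begin

lemma faces_iff: "S \<in> faces k A m \<longleftrightarrow> S \<subseteq> join_vertices k A \<and> card S = m \<and> inj_on fst S"
  by (auto simp: faces_def inj_on_def)

lemma finite_join: "finite A \<Longrightarrow> finite (join_vertices k A)"
  by (simp add: join_vertices_def)

lemma finite_faces: "finite A \<Longrightarrow> finite (faces k A m)"
proof -
  assume "finite A"
  then have "faces k A m \<subseteq> Pow (join_vertices k A)" "finite (Pow (join_vertices k A))"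
    by (auto simp: faces_def finite_join)
  then show ?thesis by (rule finite_subset)
qed

lemma face_finite: "finite A \<Longrightarrow> S \<in> faces k A m \<Longrightarrow> finite S"
  by (meson faces_iff finite_join finite_subset)

lemma face_card: "S \<in> faces k A m \<Longrightarrow> card S = m"
  by (simp add: faces_def)

lemma face_sub: "S \<in> faces k A m \<Longrightarrow> S \<subseteq> join_vertices k A"
  by (simp add: faces_def)

lemma face_inj: "S \<in> faces k A m \<Longrightarrow> v \<in> S \<Longrightarrow> w \<in> S \<Longrightarrow> fst v = fst w \<Longrightarrow> v = w"
  by (simp add: faces_def)

lemma face_remove: "finite A \<Longrightarrow> S \<in> faces k A m \<Longrightarrow> v \<in> S \<Longrightarrow> S - {v} \<in> faces k A (m - 1)"
  using face_finite[of A S k m] by (auto simp: faces_def)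

lemma face_remove': "finite A \<Longrightarrow> S \<in> faces k A (Suc m) \<Longrightarrow> v \<in> S \<Longrightarrow> S - {v} \<in> faces k A m"
  using face_remove[of A S k "Suc m" v] by simp

lemma face_insert_iff:
  assumes "finite A" "S \<in> faces k A m" "v \<notin> S"
  shows "insert v S \<in> faces k A (Suc m) \<longleftrightarrow> v \<in> join_vertices k A \<and> fst v \<notin> fst ` S"
  using assms face_finite[OF assms(1,2)] by (auto simp: faces_def) (force simp: image_iff)

lemma fst_join: "v \<in> join_vertices k A \<Longrightarrow> fst v \<in> {1..k+1}"
  by (auto simp: join_vertices_def)

lemma face_fst_card: "S \<in> faces k A m \<Longrightarrow> card (fst ` S) = m"
  by (simp add: faces_def card_image inj_on_def)

lemma face_fst_sub: "S \<in> faces k A m \<Longrightarrow> fst ` S \<subseteq> {1..k+1}"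
  using face_sub fst_join by blast

lemma nbr_eq:
  assumes "finite A" "S \<in> faces k A m"
  shows "{v \<in> join_vertices k A - S. insert v S \<in> faces k A (m+1)} = {v \<in> join_vertices k A. fst v \<notin> fst ` S}"
  using face_insert_iff[OF assms] by auto

lemma nbr_eq2:
  "{v \<in> join_vertices k A. fst v \<notin> fst ` S} = ({1..k+1} - fst ` S) \<times> A"
  by (force simp: join_vertices_def)

lemma card_nbr:
  assumes "finite A" "S \<in> faces k A m"
  shows "card {v \<in> join_vertices k A. fst v \<notin> fst ` S} = (k + 1 - m) * card A"
proof -
  have "card ({1..k+1} - fst ` S) = k + 1 - m"
    using face_fst_sub[OF assms(2)] face_fst_card[OF assms(2)]
    by (simp add: card_Diff_subset finite_subset)
  then show ?thesis by (simp add: nbr_eq2 card_cartesian_product)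
qed

lemma vsign_sq: "vsign v T * vsign v T = 1"
  by (simp add: vsign_def flip: power_add)

lemma vsign_remove:
  assumes "finite T" "w \<in> T" "fst w \<noteq> fst v"
  shows "vsign v (T - {w}) = (if fst w < fst v then - vsign v T else vsign v T)"
proof (cases "fst w < fst v")
  case True
  have e: "{x \<in> T - {w}. fst x < fst v} = {x \<in> T. fst x < fst v} - {w}" by auto
  have c: "card {x \<in> T. fst x < fst v} = Suc (card ({x \<in> T. fst x < fst v} - {w}))"
    using card_Suc_Diff1[of "{x \<in> T. fst x < fst v}" w] True assms by auto
  show ?thesis using True unfolding vsign_def e c by simp
next
  case False
  then have e: "{x \<in> T - {w}. fst x < fst v} = {x \<in> T. fst x < fst v}" by auto
  show ?thesis using False unfolding vsign_def e by simp
qed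

lemma vsign_insert:
  assumes "finite T" "w \<notin> T" "fst w \<noteq> fst v"
  shows "vsign v (insert w T) = (if fst w < fst v then - vsign v T else vsign v T)"
proof -
  have "vsign v T = vsign v (insert w T - {w})" using assms(2) by simp
  also have "\<dots> = (if fst w < fst v then - vsign v (insert w T) else vsign v (insert w T))"
    using assms by (intro vsign_remove) auto
  finally show ?thesis by auto
qed

lemma vsign_swap:
  assumes "finite S" "w \<in> S" "fst u = fst w"
  shows "vsign u (insert u (S - {w})) = vsign w S"
proof -
  have "{x \<in> insert u (S - {w}). fst x < fst u} = {x \<in> S. fst x < fst w}"
    using assms by auto
  then show ?thesis by (simp add: vsign_def)
qed

lemma antisym_sum_zero:
  fixes a :: "'x \<Rightarrow> 'x \<Rightarrow> real"
  assumes "finite T" "\<And>v w. v \<in> T \<Longrightarrow> w \<in> T \<Longrightarrow> v \<noteq> w \<Longrightarrow> a w v = - a v w"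
  shows "(\<Sum>v\<in>T. \<Sum>w\<in>T - {v}. a v w) = 0"
proof -
  let ?P = "{p \<in> T \<times> T. fst p \<noteq> snd p}"
  have fP: "finite ?P" using assms(1) by auto
  have 1: "(\<Sum>v\<in>T. \<Sum>w\<in>T - {v}. a v w) = (\<Sum>p\<in>Sigma T (\<lambda>v. T - {v}). a (fst p) (snd p))"
    using assms(1) by (subst sum.Sigma) (auto simp: split_beta)
  have P: "Sigma T (\<lambda>v. T - {v}) = ?P" by auto
  have 2: "(\<Sum>p\<in>?P. a (fst p) (snd p)) = (\<Sum>p\<in>?P. a (snd p) (fst p))"
    by (rule sum.reindex_bij_witness[where i = "\<lambda>p. (snd p, fst p)" and j = "\<lambda>p. (snd p, fst p)"]) auto
  also have "\<dots> = (\<Sum>p\<in>?P. - a (fst p) (snd p))"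
    by (rule sum.cong) (auto intro: assms(2))
  also have "\<dots> = - (\<Sum>p\<in>?P. a (fst p) (snd p))"
    by (simp add: sum_negf)
  finally show ?thesis using 1 P by simp
qed

lemma cobound_cobound:
  assumes "finite A"
  shows "cobound k A (Suc m) (cobound k A m f) = (\<lambda>T. 0)"
proof
  fix T
  show "cobound k A (Suc m) (cobound k A m f) T = 0"
  proof (cases "T \<in> faces k A (Suc m + 1)")
    case False then show ?thesis by (simp add: cobound_def)
  next
    case True
    have fT: "finite T" using face_finite[OF assms True] .
    have "cobound k A (Suc m) (cobound k A m f) T =
      (\<Sum>v\<in>T. \<Sum>w\<in>T - {v}. vsign v T * (vsign w (T - {v}) * f (T - {v} - {w})))"
      using True face_remove'[OF assms, of T k "Suc m"]
      by (simp add: cobound_def sum_distrib_left)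
    also have "\<dots> = 0"
    proof (rule antisym_sum_zero[OF fT])
      fix v w assume vw: "v \<in> T" "w \<in> T" "v \<noteq> w"
      then have ne: "fst v \<noteq> fst w" using face_inj[OF True] by blast
      have e: "T - {w} - {v} = T - {v} - {w}" by auto
      show "vsign w T * (vsign v (T - {w}) * f (T - {w} - {v})) =
          - (vsign v T * (vsign w (T - {v}) * f (T - {v} - {w})))"
        using vw ne by (auto simp: vsign_remove[OF fT] e)
    qed
    finally show ?thesis .
  qed
qed

lemma vsign_self_insert: "vsign v (insert v S) = vsign v S"
proof -
  have "{x \<in> insert v S. fst x < fst v} = {x \<in> S. fst x < fst v}" by auto
  then show ?thesis by (simp add: vsign_def)
qed

lemma cobound_adjoint:
  assumes fA: "finite A"
  shows "(\<Sum>T\<in>faces k A (Suc m). cobound k A m f T * g T) =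
         (\<Sum>S\<in>faces k A m. f S * cobound_adj k A m g S)"
proof -
  let ?N = "\<lambda>S. {v \<in> join_vertices k A - S. insert v S \<in> faces k A (m+1)}"
  have "(\<Sum>T\<in>faces k A (Suc m). cobound k A m f T * g T) =
        (\<Sum>T\<in>faces k A (Suc m). \<Sum>v\<in>T. vsign v T * f (T - {v}) * g T)"
    by (rule sum.cong) (auto simp: cobound_def sum_distrib_right)
  also have "\<dots> = (\<Sum>p\<in>Sigma (faces k A (Suc m)) (\<lambda>T. T). vsign (snd p) (fst p) * f (fst p - {snd p}) * g (fst p))"
    using finite_faces[OF fA] face_finite[OF fA] by (subst sum.Sigma) (auto simp: split_beta)
  also have "\<dots> = (\<Sum>p\<in>Sigma (faces k A m) ?N. f (fst p) * (vsign (snd p) (insert (snd p) (fst p)) * g (insert (snd p) (fst p))))"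
  proof (rule sum.reindex_bij_witness[where i = "\<lambda>p. (insert (snd p) (fst p), snd p)" and j = "\<lambda>p. (fst p - {snd p}, snd p)"])
    fix a assume a: "a \<in> Sigma (faces k A (Suc m)) (\<lambda>T. T)"
    then show "(insert (snd (fst a - {snd a}, snd a)) (fst (fst a - {snd a}, snd a)), snd (fst a - {snd a}, snd a)) = a"
      by (auto simp: insert_absorb)
    show "(fst a - {snd a}, snd a) \<in> Sigma (faces k A m) ?N"
      using a face_remove'[OF fA, of "fst a" k m "snd a"] face_sub[of "fst a" k A "Suc m"] by (auto simp: insert_absorb)
    show "f (fst (fst a - {snd a}, snd a)) * (vsign (snd (fst a - {snd a}, snd a)) (insert (snd (fst a - {snd a}, snd a)) (fst (fst a - {snd a}, snd a))) * g (insert (snd (fst a - {snd a}, snd a)) (fst (fst a - {snd a}, snd a)))) =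
         vsign (snd a) (fst a) * f (fst a - {snd a}) * g (fst a)"
      using a by (auto simp: insert_absorb)
  next
    fix b assume b: "b \<in> Sigma (faces k A m) ?N"
    then show "(fst (insert (snd b) (fst b), snd b) - {snd (insert (snd b) (fst b), snd b)}, snd (insert (snd b) (fst b), snd b)) = b"
      by auto
    show "(insert (snd b) (fst b), snd b) \<in> Sigma (faces k A (Suc m)) (\<lambda>T. T)" using b by auto
  qed
  also have "\<dots> = (\<Sum>S\<in>faces k A m. \<Sum>v\<in>?N S. f S * (vsign v (insert v S) * g (insert v S)))"
    using finite_faces[OF fA] finite_join[OF fA] by (subst sum.Sigma) (auto simp: split_beta)
  also have "\<dots> = (\<Sum>S\<in>faces k A m. f S * cobound_adj k A m g S)"
    by (rule sum.cong) (auto simp: cobound_adj_def sum_distrib_left)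
  finally show ?thesis .
qed

lemma lap_formula:
  assumes fA: "finite A" and sig: "\<sigma> \<in> faces k A (Suc m)"
  shows "lap k A (Suc m) f \<sigma> = real ((k - m) * card A) * f \<sigma> +
           (\<Sum>w\<in>\<sigma>. \<Sum>g\<in>A. f (insert (fst w, g) (\<sigma> - {w})))"
proof -
  define J where "J = join_vertices k A"
  define N where "N = {v \<in> J. fst v \<notin> fst ` \<sigma>}"
  have fs: "finite \<sigma>" using face_finite[OF fA sig] .
  have fN: "finite N" using finite_join[OF fA] by (simp add: N_def J_def)
  have cN: "card N = (k - m) * card A"
    using card_nbr[OF fA sig] by (simp add: N_def J_def)
  have Nns: "v \<in> N \<Longrightarrow> v \<notin> \<sigma>" for v by (auto simp: N_def)
  define U where "U v w = vsign v (insert v \<sigma>) * vsign w (insert v \<sigma>) * f (insert v \<sigma> - {w})" for v w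
  define Dn where "Dn w v = vsign w \<sigma> * vsign v (insert v (\<sigma> - {w})) * f (insert v (\<sigma> - {w}))" for w v
  have up: "lap_up k A (Suc m) f \<sigma> = real (card N) * f \<sigma> + (\<Sum>v\<in>N. \<Sum>w\<in>\<sigma>. U v w)"
  proof -
    have "lap_up k A (Suc m) f \<sigma> = (\<Sum>v\<in>N. vsign v (insert v \<sigma>) * cobound k A (Suc m) f (insert v \<sigma>))"
      using nbr_eq[OF fA sig] sig by (simp add: lap_up_def cobound_adj_def N_def J_def)
    also have "\<dots> = (\<Sum>v\<in>N. f \<sigma> + (\<Sum>w\<in>\<sigma>. U v w))"
    proof (rule sum.cong[OF refl])
      fix v assume v: "v \<in> N"
      have vs: "v \<notin> \<sigma>" using Nns[OF v] .
      have ins: "insert v \<sigma> \<in> faces k A (Suc m + 1)"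
        using face_insert_iff[OF fA sig vs] v by (simp add: N_def J_def)
      have "cobound k A (Suc m) f (insert v \<sigma>) = vsign v (insert v \<sigma>) * f \<sigma> +
              (\<Sum>w\<in>\<sigma>. vsign w (insert v \<sigma>) * f (insert v \<sigma> - {w}))"
        using ins fs vs by (simp add: cobound_def sum.insert)
      then show "vsign v (insert v \<sigma>) * cobound k A (Suc m) f (insert v \<sigma>) = f \<sigma> + (\<Sum>w\<in>\<sigma>. U v w)"
        by (simp add: U_def distrib_left sum_distrib_left vsign_sq flip: mult.assoc)
    qed
    also have "\<dots> = real (card N) * f \<sigma> + (\<Sum>v\<in>N. \<Sum>w\<in>\<sigma>. U v w)"
      by (simp add: sum.distrib)
    finally show ?thesis .
  qed
  have down: "lap_down k A (Suc m) f \<sigma> = (\<Sum>w\<in>\<sigma>. \<Sum>g\<in>A. f (insert (fst w, g) (\<sigma> - {w})))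
       + (\<Sum>w\<in>\<sigma>. \<Sum>v\<in>N. Dn w v)"
  proof -
    have "lap_down k A (Suc m) f \<sigma> = (\<Sum>w\<in>\<sigma>. vsign w \<sigma> * cobound_adj k A m f (\<sigma> - {w}))"
      using sig by (simp add: lap_down_def cobound_def)
    also have "\<dots> = (\<Sum>w\<in>\<sigma>. (\<Sum>g\<in>A. f (insert (fst w, g) (\<sigma> - {w}))) + (\<Sum>v\<in>N. Dn w v))"
    proof (rule sum.cong[OF refl])
      fix w assume w: "w \<in> \<sigma>"
      have sw: "\<sigma> - {w} \<in> faces k A m" using face_remove'[OF fA sig w] .
      have fw: "fst ` (\<sigma> - {w}) = fst ` \<sigma> - {fst w}"
      proof
        show "fst ` (\<sigma> - {w}) \<subseteq> fst ` \<sigma> - {fst w}"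
        proof (rule subsetI)
          fix y assume "y \<in> fst ` (\<sigma> - {w})"
          then obtain x where x: "x \<in> \<sigma>" "x \<noteq> w" "y = fst x" by auto
          then show "y \<in> fst ` \<sigma> - {fst w}" using face_inj[OF sig, of x w] w by auto
        qed
        show "fst ` \<sigma> - {fst w} \<subseteq> fst ` (\<sigma> - {w})" by blast
      qed
      have wJ: "fst w \<in> {1..k+1}" using face_fst_sub[OF sig] w by auto
      have idx: "{u \<in> J - (\<sigma> - {w}). insert u (\<sigma> - {w}) \<in> faces k A (m + 1)} =
                 (\<lambda>g. (fst w, g)) ` A \<union> N"
        using nbr_eq[OF fA sw] wJ by (auto simp: fw N_def J_def join_vertices_def)
      have disj: "(\<lambda>g. (fst w, g)) ` A \<inter> N = {}" using w by (auto simp: N_def)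
      have "cobound_adj k A m f (\<sigma> - {w}) =
         (\<Sum>u\<in>{u \<in> J - (\<sigma> - {w}). insert u (\<sigma> - {w}) \<in> faces k A (m + 1)}. vsign u (insert u (\<sigma> - {w})) * f (insert u (\<sigma> - {w})))"
        using sw by (simp add: cobound_adj_def J_def)
      also have "\<dots> = (\<Sum>u\<in>(\<lambda>g. (fst w, g)) ` A \<union> N. vsign u (insert u (\<sigma> - {w})) * f (insert u (\<sigma> - {w})))"
        by (simp only: idx)
      also have "\<dots> = (\<Sum>u\<in>(\<lambda>g. (fst w, g)) ` A. vsign u (insert u (\<sigma> - {w})) * f (insert u (\<sigma> - {w})))
          + (\<Sum>u\<in>N. vsign u (insert u (\<sigma> - {w})) * f (insert u (\<sigma> - {w})))"
        using fA fN disj by (simp add: sum.union_disjoint)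
      also have "(\<Sum>u\<in>(\<lambda>g. (fst w, g)) ` A. vsign u (insert u (\<sigma> - {w})) * f (insert u (\<sigma> - {w})))
          = (\<Sum>g\<in>A. vsign w \<sigma> * f (insert (fst w, g) (\<sigma> - {w})))"
        by (subst sum.reindex) (auto simp: inj_on_def vsign_swap[OF fs w])
      finally show "vsign w \<sigma> * cobound_adj k A m f (\<sigma> - {w}) =
          (\<Sum>g\<in>A. f (insert (fst w, g) (\<sigma> - {w}))) + (\<Sum>v\<in>N. Dn w v)"
        by (simp add: Dn_def distrib_left sum_distrib_left vsign_sq flip: mult.assoc)
    qed
    also have "\<dots> = (\<Sum>w\<in>\<sigma>. \<Sum>g\<in>A. f (insert (fst w, g) (\<sigma> - {w}))) + (\<Sum>w\<in>\<sigma>. \<Sum>v\<in>N. Dn w v)"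
      by (simp add: sum.distrib)
    finally show ?thesis .
  qed
  have cancel: "Dn w v = - U v w" if w: "w \<in> \<sigma>" and v: "v \<in> N" for w v
  proof -
    have vs: "v \<notin> \<sigma>" using Nns[OF v] .
    have ne: "fst v \<noteq> fst w" using v w by (auto simp: N_def)
    have e: "insert v \<sigma> - {w} = insert v (\<sigma> - {w})" using vs w ne by auto
    have s1: "vsign v (\<sigma> - {w}) = (if fst w < fst v then - vsign v \<sigma> else vsign v \<sigma>)"
      using vsign_remove[OF fs w] ne by simp
    have s2: "vsign w (insert v \<sigma>) = (if fst v < fst w then - vsign w \<sigma> else vsign w \<sigma>)"
      using vsign_insert[OF fs vs] ne by simp
    show ?thesis
    proof (cases "fst v < fst w")
      case True
      then have "\<not> fst w < fst v" by simp
      then show ?thesis using True by (simp add: Dn_def U_def e s1 s2 vsign_self_insert)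
    next
      case False
      then have "fst w < fst v" using ne by simp
      then show ?thesis using False by (simp add: Dn_def U_def e s1 s2 vsign_self_insert)
    qed
  qed
  have "(\<Sum>w\<in>\<sigma>. \<Sum>v\<in>N. Dn w v) = - (\<Sum>v\<in>N. \<Sum>w\<in>\<sigma>. U v w)"
    by (subst sum.swap) (simp add: cancel sum_negf)
  then show ?thesis
    by (simp add: lap_def up down cN)
qed

interpretation cs: vector_space "cscale :: real \<Rightarrow> ('x \<Rightarrow> real) \<Rightarrow> ('x \<Rightarrow> real)"
  by unfold_locales (auto simp: cscale_def fun_eq_iff algebra_simps)

lemma sum_fun_apply: "(\<Sum>i\<in>I. f i) x = (\<Sum>i\<in>I. f i x)"
  by (induction I rule: infinite_finite_induct) auto

lemma cscale_apply: "cscale c f x = c * f x"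
  by (simp add: cscale_def)

definition lin :: "(('x \<Rightarrow> real) \<Rightarrow> ('y \<Rightarrow> real)) \<Rightarrow> bool" where
  "lin L \<longleftrightarrow> (\<forall>f g. L (f + g) = L f + L g) \<and> (\<forall>c f. L (cscale c f) = cscale c (L f))"

lemma lin_add: "lin L \<Longrightarrow> L (f + g) = L f + L g" by (simp add: lin_def)
lemma lin_scale: "lin L \<Longrightarrow> L (cscale c f) = cscale c (L f)" by (simp add: lin_def)

lemma cscale_zero: "cscale 0 f = 0"
  by (simp add: cscale_def fun_eq_iff)

lemma cscale_m1: "cscale (-1) f = - f"
  by (simp add: cscale_def fun_eq_iff)

lemma lin_zero: "lin L \<Longrightarrow> L 0 = 0"
  using lin_scale[of L 0 0] by simp

lemma lin_sum: "lin L \<Longrightarrow> L (\<Sum>i\<in>I. h i) = (\<Sum>i\<in>I. L (h i))"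
  by (induction I rule: infinite_finite_induct) (auto simp: lin_zero lin_add)

lemma lin_neg: "lin L \<Longrightarrow> L (- f) = - L f"
proof -
  assume l: "lin L"
  have "L (- f) = L (cscale (-1) f)" by (simp only: cscale_m1)
  also have "\<dots> = cscale (-1) (L f)" by (rule lin_scale[OF l])
  also have "\<dots> = - L f" by (rule cscale_m1)
  finally show ?thesis .
qed

lemma lin_diff: "lin L \<Longrightarrow> L (f - g) = L f - L g"
proof -
  assume l: "lin L"
  have "f - g = f + (- g)" by simp
  then have "L (f - g) = L f + L (- g)" using lin_add[OF l, of f "- g"] by (simp only:)
  then show ?thesis using lin_neg[OF l] by simp
qed

lemma lin_comp: "lin L \<Longrightarrow> lin M \<Longrightarrow> lin (\<lambda>f. L (M f))"
  by (simp add: lin_def)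

lemma lin_plus: "lin L \<Longrightarrow> lin M \<Longrightarrow> lin (\<lambda>f. L f + M f)"
  by (simp add: lin_def fun_eq_iff cscale_def algebra_simps)

lemma subspace_eig:
  assumes l: "lin L" and S: "cs.subspace S"
  shows "cs.subspace {v \<in> S. L v = cscale \<mu> v}"
  unfolding cs.subspace_def
proof (intro conjI ballI allI)
  show "0 \<in> {v \<in> S. L v = cscale \<mu> v}" using S cs.subspace_0 lin_zero[OF l] by auto
  fix x y assume x: "x \<in> {v \<in> S. L v = cscale \<mu> v}" and y: "y \<in> {v \<in> S. L v = cscale \<mu> v}"
  then show "x + y \<in> {v \<in> S. L v = cscale \<mu> v}"
    using S cs.subspace_add lin_add[OF l] by (auto simp: cs.scale_right_distrib)
next
  fix c x assume x: "x \<in> {v \<in> S. L v = cscale \<mu> v}"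
  then show "cscale c x \<in> {v \<in> S. L v = cscale \<mu> v}"
    using S cs.subspace_scale lin_scale[OF l] by (auto simp: cs.scale_left_commute)
qed

lemma subspace_image:
  assumes l: "lin L" and S: "cs.subspace S"
  shows "cs.subspace (L ` S)"
  unfolding cs.subspace_def
proof (intro conjI ballI allI)
  show "0 \<in> L ` S" using S cs.subspace_0 lin_zero[OF l] by (metis image_eqI)
  fix x y assume "x \<in> L ` S" "y \<in> L ` S"
  then obtain a b where "a \<in> S" "b \<in> S" "x = L a" "y = L b" by auto
  then show "x + y \<in> L ` S" using S cs.subspace_add lin_add[OF l, of a b] by (metis image_eqI)
next
  fix c x assume "x \<in> L ` S"
  then obtain a where "a \<in> S" "x = L a" by auto
  then show "cscale c x \<in> L ` S" using S cs.subspace_scale lin_scale[OF l, of c a] by (metis image_eqI)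
qed

lemma eig_span:
  fixes B :: "('x \<Rightarrow> real) set"
  assumes fB: "finite B" and iB: "cs.independent B" and lL: "lin L"
    and eig: "\<And>b. b \<in> B \<Longrightarrow> L b = cscale (lam b) b"
  shows "{v \<in> cs.span B. L v = cscale \<mu> v} = cs.span {b\<in>B. lam b = \<mu>}"
proof
  show "{v \<in> cs.span B. L v = cscale \<mu> v} \<subseteq> cs.span {b\<in>B. lam b = \<mu>}"
  proof clarify
    fix v assume v: "v \<in> cs.span B" and Lv: "L v = cscale \<mu> v"
    obtain u where u: "v = (\<Sum>b\<in>B. cscale (u b) b)"
      using v cs.span_finite[OF fB] by auto
    have "L v = (\<Sum>b\<in>B. cscale (u b * lam b) b)"
      using u lL eig by (simp add: lin_sum lin_scale cs.scale_scale)
    moreover have e2: "cscale \<mu> v = (\<Sum>b\<in>B. cscale (u b * \<mu>) b)"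
      by (simp add: u cs.scale_sum_right cs.scale_scale mult.commute)
    moreover have "(\<Sum>b\<in>B. cscale (u b * (lam b - \<mu>)) b) = (\<Sum>b\<in>B. cscale (u b * lam b) b - cscale (u b * \<mu>) b)"
      by (rule sum.cong) (simp_all add: right_diff_distrib cs.scale_left_diff_distrib)
    ultimately have "(\<Sum>b\<in>B. cscale (u b * (lam b - \<mu>)) b) = 0"
      using Lv by (simp add: sum_subtractf)
    then have z: "u b * (lam b - \<mu>) = 0" if "b \<in> B" for b
      using cs.independentD[OF iB fB subset_refl, of "\<lambda>b. u b * (lam b - \<mu>)"] that by simp
    have "v = (\<Sum>b\<in>{b\<in>B. lam b = \<mu>}. cscale (u b) b)"
      unfolding u using fB z by (intro sum.mono_neutral_right) auto
    moreover have "(\<Sum>b\<in>{b\<in>B. lam b = \<mu>}. cscale (u b) b) \<in> cs.span {b\<in>B. lam b = \<mu>}"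
      by (intro cs.span_sum cs.span_scale cs.span_base) auto
    ultimately show "v \<in> cs.span {b\<in>B. lam b = \<mu>}" by simp
  qed
next
  show "cs.span {b\<in>B. lam b = \<mu>} \<subseteq> {v \<in> cs.span B. L v = cscale \<mu> v}"
  proof
    fix v assume v: "v \<in> cs.span {b\<in>B. lam b = \<mu>}"
    have fB': "finite {b\<in>B. lam b = \<mu>}" using fB by auto
    obtain u where u: "v = (\<Sum>b\<in>{b\<in>B. lam b = \<mu>}. cscale (u b) b)"
      using v cs.span_finite[OF fB'] by auto
    have "L v = cscale \<mu> v"
      using u lL eig by (simp add: lin_sum lin_scale cs.scale_scale cs.scale_sum_right mult.commute)
    moreover have "v \<in> cs.span B" using v cs.span_mono[of "{b\<in>B. lam b = \<mu>}" B] by auto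
    ultimately show "v \<in> {v \<in> cs.span B. L v = cscale \<mu> v}" by simp
  qed
qed

lemma eig_dim:
  fixes B :: "('x \<Rightarrow> real) set"
  assumes fB: "finite B" and iB: "cs.independent B" and lL: "lin L"
    and eig: "\<And>b. b \<in> B \<Longrightarrow> L b = cscale (lam b) b"
  shows "cs.dim {v \<in> cs.span B. L v = cscale \<mu> v} = card {b\<in>B. lam b = \<mu>}"
proof -
  have "{v \<in> cs.span B. L v = cscale \<mu> v} = cs.span {b\<in>B. lam b = \<mu>}"
    by (rule eig_span[OF assms])
  then show ?thesis by (simp add: cs.dim_eq_card_independent cs.independent_mono[OF iB])
qed

lemma finite_basis_of:
  fixes U :: "('x \<Rightarrow> real) set"
  assumes "U \<subseteq> cs.span S" "finite S"
  obtains B where "B \<subseteq> U" "cs.independent B" "U \<subseteq> cs.span B" "card B = cs.dim U" "finite B"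
proof -
  obtain B where B: "B \<subseteq> U" "cs.independent B" "U \<subseteq> cs.span B" "card B = cs.dim U"
    using cs.basis_exists by blast
  have "finite B" using cs.independent_span_bound[OF assms(2) B(2)] B(1) assms(1) by auto
  then show ?thesis using B that by blast
qed

lemma dim_direct_sum:
  fixes U :: "('x \<Rightarrow> real) set"
  assumes sU: "cs.subspace U" and sU': "cs.subspace U'" and UW: "U \<subseteq> W" and U'W: "U' \<subseteq> W"
    and dec: "\<And>w. w \<in> W \<Longrightarrow> \<exists>u\<in>U. \<exists>u'\<in>U'. w = u + u'"
    and int: "\<And>x. x \<in> U \<Longrightarrow> x \<in> U' \<Longrightarrow> x = 0"
    and WS: "W \<subseteq> cs.span S" and fS: "finite S"
  shows "cs.dim W = cs.dim U + cs.dim U'"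
proof -
  obtain B where B: "B \<subseteq> U" "cs.independent B" "U \<subseteq> cs.span B" "card B = cs.dim U" "finite B"
    using finite_basis_of[of U S] UW WS fS by blast
  obtain B' where B': "B' \<subseteq> U'" "cs.independent B'" "U' \<subseteq> cs.span B'" "card B' = cs.dim U'" "finite B'"
    using finite_basis_of[of U' S] U'W WS fS by blast
  have disj: "B \<inter> B' = {}"
  proof (rule ccontr)
    assume "B \<inter> B' \<noteq> {}"
    then obtain x where "x \<in> B" "x \<in> B'" by auto
    then have "x = 0" using int B(1) B'(1) by auto
    then show False using \<open>x \<in> B\<close> cs.dependent_zero B(2) by auto
  qed
  have ind: "cs.independent (B \<union> B')"
  proof (rule cs.independent_if_scalars_zero)
    show "finite (B \<union> B')" using B(5) B'(5) by simp
    fix c x assume s0: "(\<Sum>x\<in>B \<union> B'. cscale (c x) x) = 0" and x: "x \<in> B \<union> B'"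
    define p where "p = (\<Sum>x\<in>B. cscale (c x) x)"
    define q where "q = (\<Sum>x\<in>B'. cscale (c x) x)"
    have pq: "p + q = 0" using s0 disj B(5) B'(5) by (simp add: p_def q_def sum.union_disjoint)
    have pU: "p \<in> U" unfolding p_def using B(1) sU by (auto intro!: cs.subspace_sum cs.subspace_scale)
    have qU: "q \<in> U'" unfolding q_def using B'(1) sU' by (auto intro!: cs.subspace_sum cs.subspace_scale)
    have "p = - q" using pq by (simp add: eq_neg_iff_add_eq_0)
    then have "p \<in> U'" using qU sU' cs.subspace_neg by auto
    then have p0: "p = 0" using int pU by auto
    then have q0: "q = 0" using pq by simp
    have c1: "c x = 0" if "x \<in> B"
      using cs.independentD[OF B(2) B(5) subset_refl, of c x] p0 that by (simp add: p_def)
    have c2: "c x = 0" if "x \<in> B'"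
      using cs.independentD[OF B'(2) B'(5) subset_refl, of c x] q0 that by (simp add: q_def)
    show "c x = 0" using x c1 c2 by blast
  qed
  have "B \<union> B' \<subseteq> W" using B(1) B'(1) UW U'W by auto
  moreover have "W \<subseteq> cs.span (B \<union> B')"
  proof
    fix w assume "w \<in> W"
    then obtain u u' where "u \<in> U" "u' \<in> U'" "w = u + u'" using dec by blast
    moreover have "u \<in> cs.span (B \<union> B')" using \<open>u \<in> U\<close> B(3) cs.span_mono[of B "B \<union> B'"] by auto
    moreover have "u' \<in> cs.span (B \<union> B')" using \<open>u' \<in> U'\<close> B'(3) cs.span_mono[of B' "B \<union> B'"] by auto
    ultimately show "w \<in> cs.span (B \<union> B')" by (simp add: cs.span_add)
  qed
  ultimately have "card (B \<union> B') = cs.dim W" using cs.basis_card_eq_dim ind by blast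
  then show ?thesis using card_Un_disjoint[OF B(5) B'(5) disj] B(4) B'(4) by simp
qed

lemma dim_inj_image:
  fixes U :: "('x \<Rightarrow> real) set" and D :: "('x \<Rightarrow> real) \<Rightarrow> ('y \<Rightarrow> real)"
  assumes lD: "lin D" and sU: "cs.subspace U" and inj: "inj_on D U"
    and US: "U \<subseteq> cs.span S" and fS: "finite S"
  shows "cs.dim (D ` U) = cs.dim U"
proof -
  obtain B where B: "B \<subseteq> U" "cs.independent B" "U \<subseteq> cs.span B" "card B = cs.dim U" "finite B"
    using finite_basis_of[OF US fS] by blast
  have injB: "inj_on D B" using inj B(1) inj_on_subset by blast
  have ind: "cs.independent (D ` B)"
  proof (rule cs.independent_if_scalars_zero)
    show "finite (D ` B)" using B(5) by simp
    fix c y assume s0: "(\<Sum>x\<in>D ` B. cscale (c x) x) = 0" and y: "y \<in> D ` B"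
    define x where "x = (\<Sum>b\<in>B. cscale (c (D b)) b)"
    have xU: "x \<in> U" unfolding x_def using B(1) sU by (auto intro!: cs.subspace_sum cs.subspace_scale)
    have "D x = (\<Sum>b\<in>B. cscale (c (D b)) (D b))" unfolding x_def using lD by (simp add: lin_sum lin_scale)
    also have "\<dots> = (\<Sum>x\<in>D ` B. cscale (c x) x)" using injB by (simp add: sum.reindex)
    finally have "D x = D 0" using s0 lin_zero[OF lD] by simp
    then have "x = 0" using inj xU cs.subspace_0[OF sU] by (auto dest: inj_onD)
    then have "\<And>b. b \<in> B \<Longrightarrow> c (D b) = 0"
      using cs.independentD[OF B(2) B(5) subset_refl, of "\<lambda>b. c (D b)"] by (auto simp: x_def)
    then show "c y = 0" using y by auto
  qed
  have "D ` B \<subseteq> D ` U" using B(1) by auto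
  moreover have "D ` U \<subseteq> cs.span (D ` B)"
  proof
    fix z assume "z \<in> D ` U"
    then obtain u where u: "u \<in> U" "z = D u" by auto
    then obtain w where w: "u = (\<Sum>b\<in>B. cscale (w b) b)" using B(3) cs.span_finite[OF B(5)] by auto
    have "z = (\<Sum>b\<in>B. cscale (w b) (D b))" using u w lD by (simp add: lin_sum lin_scale)
    moreover have "(\<Sum>b\<in>B. cscale (w b) (D b)) \<in> cs.span (D ` B)"
      by (intro cs.span_sum cs.span_scale cs.span_base) auto
    ultimately show "z \<in> cs.span (D ` B)" by simp
  qed
  ultimately have "card (D ` B) = cs.dim (D ` U)" using cs.basis_card_eq_dim ind by blast
  then show ?thesis using card_image[OF injB] B(4) by simp
qed

lemma dim_pos:
  fixes U :: "('x \<Rightarrow> real) set"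
  assumes "U \<subseteq> cs.span S" "finite S" "v \<in> U" "v \<noteq> 0"
  shows "cs.dim U \<noteq> 0"
proof
  assume d: "cs.dim U = 0"
  obtain B where B: "B \<subseteq> U" "cs.independent B" "U \<subseteq> cs.span B" "card B = cs.dim U" "finite B"
    using finite_basis_of[OF assms(1,2)] by blast
  then have "B = {}" using d by simp
  then show False using B(3) assms(3,4) by auto
qed

locale YG =
  fixes k :: nat and A :: "'a set"
  assumes finA: "finite A" and neA: "A \<noteq> {}"
begin

abbreviation "n \<equiv> card A"

lemma n_pos: "n > 0" using finA neA by (simp add: card_gt_0_iff)

definition delta :: "'a vtx set \<Rightarrow> 'a cochain" where
  "delta S = (\<lambda>T. if T = S then 1 else 0)"

lemma cochains_subspace: "cs.subspace (cochains k A m)"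
  unfolding cs.subspace_def cochains_def by (auto simp: cscale_def)

lemma delta_in: "S \<in> faces k A m \<Longrightarrow> delta S \<in> cochains k A m"
  by (auto simp: cochains_def delta_def)

lemma cochain_expand:
  assumes "f \<in> cochains k A m"
  shows "f = (\<Sum>S\<in>faces k A m. cscale (f S) (delta S))"
proof
  fix T
  have "(\<Sum>S\<in>faces k A m. cscale (f S) (delta S)) T = (\<Sum>S\<in>faces k A m. if S = T then f S else 0)"
    by (simp add: sum_fun_apply cscale_apply delta_def if_distrib eq_commute cong: if_cong)
  also have "\<dots> = (if T \<in> faces k A m then f T else 0)"
    using finite_faces[OF finA] by (simp add: sum.delta)
  also have "\<dots> = f T" using assms by (auto simp: cochains_def)
  finally show "f T = (\<Sum>S\<in>faces k A m. cscale (f S) (delta S)) T" by simp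
qed

lemma cochains_span: "cochains k A m = cs.span (delta ` faces k A m)"
proof
  show "cochains k A m \<subseteq> cs.span (delta ` faces k A m)"
  proof
    fix f assume f: "f \<in> cochains k A m"
    have "(\<Sum>S\<in>faces k A m. cscale (f S) (delta S)) \<in> cs.span (delta ` faces k A m)"
      by (intro cs.span_sum cs.span_scale cs.span_base) auto
    then show "f \<in> cs.span (delta ` faces k A m)" using cochain_expand[OF f] by simp
  qed
  show "cs.span (delta ` faces k A m) \<subseteq> cochains k A m"
    using cochains_subspace delta_in by (intro cs.span_minimal) auto
qed

lemma delta_inj: "inj delta"
  by (auto simp: inj_def delta_def fun_eq_iff split: if_splits)

lemma delta_indep: "cs.independent (delta ` faces k A m)"
proof (rule cs.independent_if_scalars_zero)
  show "finite (delta ` faces k A m)" using finite_faces[OF finA] by simp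
  fix c x assume s: "(\<Sum>x\<in>delta ` faces k A m. cscale (c x) x) = 0" and x: "x \<in> delta ` faces k A m"
  then obtain S where S: "S \<in> faces k A m" "x = delta S" by auto
  have "0 = (\<Sum>x\<in>delta ` faces k A m. cscale (c x) x) S" using s by simp
  also have "\<dots> = (\<Sum>T\<in>faces k A m. c (delta T) * delta T S)"
    using delta_inj by (simp add: sum_fun_apply cscale_apply sum.reindex inj_on_def inj_def)
  also have "\<dots> = (\<Sum>T\<in>faces k A m. if S = T then c (delta T) else 0)"
    by (rule sum.cong) (auto simp: delta_def)
  also have "\<dots> = c (delta S)" using S(1) finite_faces[OF finA] by (simp add: sum.delta)
  finally show "c x = 0" using S by simp
qed

lemma dim_cochains: "cs.dim (cochains k A m) = card (faces k A m)"
proof -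
  have "cs.dim (cochains k A m) = card (delta ` faces k A m)"
    unfolding cochains_span by (simp add: cs.dim_span cs.dim_eq_card_independent delta_indep)
  also have "\<dots> = card (faces k A m)" using delta_inj by (simp add: card_image inj_on_def inj_def)
  finally show ?thesis .
qed

lemma finite_span_cochains: "cochains k A m \<subseteq> cs.span (delta ` faces k A m)" "finite (delta ` faces k A m)"
  using cochains_span finite_faces[OF finA] by auto

lemma lin_cobound: "lin (cobound k A m)"
  unfolding lin_def
proof (intro conjI allI)
  fix f g :: "'a cochain"
  show "cobound k A m (f + g) = cobound k A m f + cobound k A m g"
    by (simp add: cobound_def fun_eq_iff distrib_left sum.distrib)
  fix c
  show "cobound k A m (cscale c f) = cscale c (cobound k A m f)"
    by (simp add: cobound_def fun_eq_iff cscale_def sum_distrib_left mult.left_commute)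
qed

lemma lin_cobound_adj: "lin (cobound_adj k A m)"
  unfolding lin_def
proof (intro conjI allI)
  fix f g :: "'a cochain"
  show "cobound_adj k A m (f + g) = cobound_adj k A m f + cobound_adj k A m g"
    by (simp add: cobound_adj_def fun_eq_iff distrib_left sum.distrib)
  fix c
  show "cobound_adj k A m (cscale c f) = cscale c (cobound_adj k A m f)"
    by (simp add: cobound_adj_def fun_eq_iff cscale_def sum_distrib_left mult.left_commute)
qed

lemma lin_lap_down: "lin (lap_down k A m)"
proof -
  have "lap_down k A m = (\<lambda>f. cobound k A (m-1) (cobound_adj k A (m-1) f))"
    by (simp add: fun_eq_iff lap_down_def)
  then show ?thesis using lin_comp[OF lin_cobound lin_cobound_adj] by simp
qed

lemma lin_lap_up: "lin (lap_up k A m)"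
proof -
  have "lap_up k A m = (\<lambda>f. cobound_adj k A m (cobound k A m f))"
    by (simp add: fun_eq_iff lap_up_def)
  then show ?thesis using lin_comp[OF lin_cobound_adj lin_cobound] by simp
qed

lemma lin_lap: "lin (lap k A m)"
proof -
  have "lap k A m = (\<lambda>f. lap_down k A m f + lap_up k A m f)" by (simp add: lap_def fun_eq_iff)
  then show ?thesis using lin_plus[OF lin_lap_down lin_lap_up] by simp
qed

lemma cobound_in: "cobound k A m f \<in> cochains k A (Suc m)"
  by (simp add: cochains_def cobound_def)

lemma cobound_adj_in: "cobound_adj k A m f \<in> cochains k A m"
  by (simp add: cochains_def cobound_adj_def)

lemma lap_down_in: "lap_down k A (Suc m) f \<in> cochains k A (Suc m)"
  by (simp add: lap_down_def cobound_in)

lemma lap_up_in: "lap_up k A m f \<in> cochains k A m"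
  by (simp add: lap_up_def cobound_adj_in)

lemma lap_in: "lap k A (Suc m) f \<in> cochains k A (Suc m)"
  using lap_down_in lap_up_in by (auto simp: lap_def cochains_def)

end

context YG
begin

definition g0 :: 'a where "g0 = (SOME g. g \<in> A)"

lemma g0_in: "g0 \<in> A"
  unfolding g0_def using neA by (simp add: some_in_eq)

definition crd :: "'a vtx set \<Rightarrow> nat \<Rightarrow> 'a" where
  "crd S i = (SOME g. (i, g) \<in> S)"

definition gr :: "nat set \<Rightarrow> (nat \<Rightarrow> 'a) \<Rightarrow> 'a vtx set" where
  "gr I p = (\<lambda>i. (i, p i)) ` I"

lemma crd_eq: "S \<in> faces k A m \<Longrightarrow> (i, g) \<in> S \<Longrightarrow> crd S i = g"
proof -
  assume S: "S \<in> faces k A m" and ig: "(i, g) \<in> S"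
  then have "(i, crd S i) \<in> S" unfolding crd_def by (metis someI)
  then show ?thesis using face_inj[OF S _ ig] by auto
qed

lemma crd_mem: "S \<in> faces k A m \<Longrightarrow> w \<in> S \<Longrightarrow> crd S (fst w) = snd w"
  using crd_eq[of S m "fst w" "snd w"] by simp

lemma crd_in_S: "S \<in> faces k A m \<Longrightarrow> i \<in> fst ` S \<Longrightarrow> (i, crd S i) \<in> S"
proof -
  assume S: "S \<in> faces k A m" and i: "i \<in> fst ` S"
  then obtain w where w: "w \<in> S" "i = fst w" by auto
  then show ?thesis using crd_mem[OF S w(1)] by simp
qed

lemma crd_A: "S \<in> faces k A m \<Longrightarrow> i \<in> fst ` S \<Longrightarrow> crd S i \<in> A"
  using crd_in_S face_sub by (fastforce simp: join_vertices_def)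

lemma fst_gr: "fst ` gr I p = I"
  by (force simp: gr_def image_image)

lemma gr_face: "I \<subseteq> {1..k+1} \<Longrightarrow> card I = m \<Longrightarrow> (\<And>i. i \<in> I \<Longrightarrow> p i \<in> A) \<Longrightarrow> gr I p \<in> faces k A m"
  by (auto simp: faces_def gr_def join_vertices_def card_image inj_on_def)

lemma crd_gr: "gr I p \<in> faces k A m \<Longrightarrow> i \<in> I \<Longrightarrow> crd (gr I p) i = p i"
  by (rule crd_eq) (auto simp: gr_def)

lemma face_gr: "S \<in> faces k A m \<Longrightarrow> S = gr (fst ` S) (crd S)"
proof
  assume S: "S \<in> faces k A m"
  show "S \<subseteq> gr (fst ` S) (crd S)"
  proof
    fix w assume w: "w \<in> S"
    then have "w = (fst w, crd S (fst w))" using crd_mem[OF S w] by simp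
    then show "w \<in> gr (fst ` S) (crd S)" unfolding gr_def using w by blast
  qed
  show "gr (fst ` S) (crd S) \<subseteq> S" unfolding gr_def using crd_in_S[OF S] by auto
qed

lemma face_eq_crd:
  assumes "S \<in> faces k A m" "T \<in> faces k A m" "fst ` S = fst ` T" "\<And>i. i \<in> fst ` S \<Longrightarrow> crd S i = crd T i"
  shows "S = T"
proof -
  have "gr (fst ` S) (crd S) = gr (fst ` T) (crd T)"
    using assms(3,4) unfolding gr_def by (auto intro!: image_cong)
  then show ?thesis using face_gr[OF assms(1)] face_gr[OF assms(2)] by simp
qed

lemma face_swap:
  assumes S: "S \<in> faces k A m" and w: "w \<in> S" and g: "g \<in> A"
  shows "insert (fst w, g) (S - {w}) \<in> faces k A m" "fst ` insert (fst w, g) (S - {w}) = fst ` S"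
proof -
  have m: "m = Suc (m - 1)" using face_card[OF S] w face_finite[OF finA S] by (cases m) auto
  have S': "S - {w} \<in> faces k A (m - 1)" using face_remove[OF finA S w] .
  have nin: "(fst w, g) \<notin> S - {w}" using face_inj[OF S _ w] by auto
  have nf: "fst w \<notin> fst ` (S - {w})" using face_inj[OF S _ w] by auto
  have J: "(fst w, g) \<in> join_vertices k A" using face_sub[OF S] w g by (auto simp: join_vertices_def)
  have "insert (fst w, g) (S - {w}) \<in> faces k A (Suc (m - 1))"
    using face_insert_iff[OF finA S' nin] J nf by simp
  then show "insert (fst w, g) (S - {w}) \<in> faces k A m" using m by simp
  show "fst ` insert (fst w, g) (S - {w}) = fst ` S" using w by auto
qed

definition chi :: "'a \<Rightarrow> 'a \<Rightarrow> real" where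
  "chi h x = (if h = g0 then 1 else (if x = h then 1 else 0) - (if x = g0 then 1 else 0))"

definition phi :: "nat \<Rightarrow> 'a vtx set \<Rightarrow> 'a cochain" where
  "phi m \<tau> = (\<lambda>\<sigma>. if \<sigma> \<in> faces k A m \<and> fst ` \<sigma> = fst ` \<tau> then \<Prod>w\<in>\<sigma>. chi (crd \<tau> (fst w)) (snd w) else 0)"

definition z :: "'a vtx set \<Rightarrow> nat" where
  "z \<tau> = card {x \<in> \<tau>. snd x = g0}"

lemma phi_in: "phi m \<tau> \<in> cochains k A m"
  by (simp add: phi_def cochains_def)

lemma sum_chi: "h \<in> A \<Longrightarrow> (\<Sum>g\<in>A. chi h g) = (if h = g0 then real n else 0)"
proof (cases "h = g0")
  case True then show ?thesis by (simp add: chi_def)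
next
  case False
  assume h: "h \<in> A"
  have "(\<Sum>g\<in>A. chi h g) = (\<Sum>g\<in>A. if g = h then 1 else 0) - (\<Sum>g\<in>A. if g = g0 then 1 else 0)"
    using False by (simp add: chi_def sum_subtractf)
  also have "\<dots> = 0" using h g0_in finA by (simp add: sum.delta)
  finally show ?thesis using False by simp
qed

lemma card_z:
  assumes S: "\<sigma> \<in> faces k A m" and T: "\<tau> \<in> faces k A m" and e: "fst ` \<sigma> = fst ` \<tau>"
  shows "card {w \<in> \<sigma>. crd \<tau> (fst w) = g0} = z \<tau>"
  unfolding z_def
proof (rule bij_betw_same_card[where f = "\<lambda>w. (fst w, g0)"])
  show "bij_betw (\<lambda>w. (fst w, g0)) {w \<in> \<sigma>. crd \<tau> (fst w) = g0} {x \<in> \<tau>. snd x = g0}"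
    unfolding bij_betw_def
  proof
    show "inj_on (\<lambda>w. (fst w, g0)) {w \<in> \<sigma>. crd \<tau> (fst w) = g0}"
      using face_inj[OF S] by (auto simp: inj_on_def)
    show "(\<lambda>w. (fst w, g0)) ` {w \<in> \<sigma>. crd \<tau> (fst w) = g0} = {x \<in> \<tau>. snd x = g0}"
    proof
      show "(\<lambda>w. (fst w, g0)) ` {w \<in> \<sigma>. crd \<tau> (fst w) = g0} \<subseteq> {x \<in> \<tau>. snd x = g0}"
      proof (rule subsetI)
        fix y assume "y \<in> (\<lambda>w. (fst w, g0)) ` {w \<in> \<sigma>. crd \<tau> (fst w) = g0}"
        then obtain w where w: "w \<in> \<sigma>" "crd \<tau> (fst w) = g0" "y = (fst w, g0)" by auto
        have "fst w \<in> fst ` \<tau>" using w(1) e by (metis image_eqI)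
        then show "y \<in> {x \<in> \<tau>. snd x = g0}" using crd_in_S[OF T, of "fst w"] w by simp
      qed
      show "{x \<in> \<tau>. snd x = g0} \<subseteq> (\<lambda>w. (fst w, g0)) ` {w \<in> \<sigma>. crd \<tau> (fst w) = g0}"
      proof (rule subsetI)
        fix x assume "x \<in> {x \<in> \<tau>. snd x = g0}"
        then have x: "x \<in> \<tau>" "snd x = g0" by auto
        then obtain w where w: "w \<in> \<sigma>" "fst w = fst x" using e by (metis imageE image_eqI)
        have "crd \<tau> (fst w) = g0" using crd_mem[OF T x(1)] w x by simp
        then show "x \<in> (\<lambda>w. (fst w, g0)) ` {w \<in> \<sigma>. crd \<tau> (fst w) = g0}"
          using w x by (auto intro!: image_eqI[of _ _ w] simp: prod_eq_iff)
      qed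
    qed
  qed
qed

lemma phi_eig:
  assumes T: "\<tau> \<in> faces k A (Suc m)"
  shows "lap k A (Suc m) (phi (Suc m) \<tau>) = cscale (real n * real (k - m + z \<tau>)) (phi (Suc m) \<tau>)"
proof
  fix \<sigma>
  show "lap k A (Suc m) (phi (Suc m) \<tau>) \<sigma> = cscale (real n * real (k - m + z \<tau>)) (phi (Suc m) \<tau>) \<sigma>"
  proof (cases "\<sigma> \<in> faces k A (Suc m)")
    case False
    then show ?thesis using lap_in[of m "phi (Suc m) \<tau>"]
      by (simp add: cochains_def phi_def cscale_apply)
  next
    case S: True
    note lf = lap_formula[OF finA S, of "phi (Suc m) \<tau>"]
    show ?thesis
    proof (cases "fst ` \<sigma> = fst ` \<tau>")
      case False
      have "phi (Suc m) \<tau> (insert (fst w, g) (\<sigma> - {w})) = 0" if "w \<in> \<sigma>" "g \<in> A" for w g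
        using face_swap(2)[OF S that] False by (simp add: phi_def)
      then show ?thesis using lf False by (simp add: phi_def cscale_apply)
    next
      case e: True
      have fs: "finite \<sigma>" using face_finite[OF finA S] .
      define P where "P w = (\<Prod>x\<in>\<sigma> - {w}. chi (crd \<tau> (fst x)) (snd x))" for w
      have inner: "(\<Sum>g\<in>A. phi (Suc m) \<tau> (insert (fst w, g) (\<sigma> - {w}))) =
          (if crd \<tau> (fst w) = g0 then real n * phi (Suc m) \<tau> \<sigma> else 0)" if w: "w \<in> \<sigma>" for w
      proof -
        have hA: "crd \<tau> (fst w) \<in> A" using crd_A[OF T, of "fst w"] w e by (metis image_eqI)
        have a: "phi (Suc m) \<tau> (insert (fst w, g) (\<sigma> - {w})) = chi (crd \<tau> (fst w)) g * P w" if g: "g \<in> A" for g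
        proof -
          have nin: "(fst w, g) \<notin> \<sigma> - {w}" using face_inj[OF S _ w] by auto
          show ?thesis using face_swap[OF S w g] e fs nin by (simp add: phi_def P_def)
        qed
        have b: "phi (Suc m) \<tau> \<sigma> = chi (crd \<tau> (fst w)) (snd w) * P w"
          using S e fs w by (simp add: phi_def P_def prod.remove)
        have "(\<Sum>g\<in>A. phi (Suc m) \<tau> (insert (fst w, g) (\<sigma> - {w}))) = (\<Sum>g\<in>A. chi (crd \<tau> (fst w)) g) * P w"
          using a by (simp add: sum_distrib_right)
        also have "\<dots> = (if crd \<tau> (fst w) = g0 then real n * P w else 0)"
          using sum_chi[OF hA] by simp
        also have "\<dots> = (if crd \<tau> (fst w) = g0 then real n * phi (Suc m) \<tau> \<sigma> else 0)"
          using b by (simp add: chi_def)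
        finally show ?thesis .
      qed
      have "(\<Sum>w\<in>\<sigma>. \<Sum>g\<in>A. phi (Suc m) \<tau> (insert (fst w, g) (\<sigma> - {w}))) =
            (\<Sum>w\<in>\<sigma>. if crd \<tau> (fst w) = g0 then real n * phi (Suc m) \<tau> \<sigma> else 0)"
        using inner by simp
      also have "\<dots> = real (card {w \<in> \<sigma>. crd \<tau> (fst w) = g0}) * (real n * phi (Suc m) \<tau> \<sigma>)"
      proof -
        have "\<sigma> \<inter> {w. crd \<tau> (fst w) = g0} = {w \<in> \<sigma>. crd \<tau> (fst w) = g0}" by auto
        then show ?thesis using fs by (simp add: sum.If_cases)
      qed
      also have "\<dots> = real (z \<tau>) * (real n * phi (Suc m) \<tau> \<sigma>)"
        using card_z[OF S T e] by simp
      finally have "lap k A (Suc m) (phi (Suc m) \<tau>) \<sigma> =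
          real ((k - m) * n) * phi (Suc m) \<tau> \<sigma> + real (z \<tau>) * (real n * phi (Suc m) \<tau> \<sigma>)"
        using lf by simp
      moreover have "real ((k - m) * n) = real n * real (k - m)" by simp
      ultimately show ?thesis by (simp add: cscale_apply ring_distribs mult_ac)
    qed
  qed
qed

end

lemma indep_of_card_le_dim:
  fixes B :: "('x \<Rightarrow> real) set"
  assumes BV: "B \<subseteq> V" and VB: "V \<subseteq> cs.span B" and fB: "finite B" and c: "card B \<le> cs.dim V"
  shows "cs.independent B" "card B = cs.dim V"
proof -
  obtain B' where B': "B' \<subseteq> B" "cs.independent B'" "B \<subseteq> cs.span B'"
    using cs.maximal_independent_subset[of B] by blast
  have "cs.span B \<subseteq> cs.span B'" using B'(3) cs.span_mono cs.span_span by blast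
  then have "V \<subseteq> cs.span B'" using VB by blast
  moreover have "B' \<subseteq> V" using B'(1) BV by blast
  ultimately have cB': "card B' = cs.dim V" using cs.basis_card_eq_dim B'(2) by blast
  have "card B' \<le> card B" using B'(1) fB by (simp add: card_mono)
  then have "card B' = card B" using c cB' by simp
  then have "B' = B" using card_subset_eq[OF fB B'(1)] by simp
  then show "cs.independent B" using B'(2) by simp
  show "card B = cs.dim V" using cB' \<open>B' = B\<close> by simp
qed

context YG
begin

definition acoef :: "'a \<Rightarrow> 'a \<Rightarrow> real" where
  "acoef x h = (if h = g0 then 1 / real n else - 1 / real n) + (if h = x \<and> x \<noteq> g0 then 1 else 0)"

lemma expand1:
  assumes x: "x \<in> A" and y: "y \<in> A"
  shows "(\<Sum>h\<in>A. acoef x h * chi h y) = (if y = x then 1 else 0)"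
proof -
  have fA': "finite (A - {g0})" using finA by simp
  have cA': "card (A - {g0}) = n - 1" using g0_in finA by simp
  have n1: "real (n - 1) = real n - 1" using n_pos by (simp add: of_nat_diff)
  have np: "real n \<noteq> 0" using n_pos by simp
  have split: "(\<Sum>h\<in>A. acoef x h * chi h y) = acoef x g0 * chi g0 y + (\<Sum>h\<in>A - {g0}. acoef x h * chi h y)"
    using finA g0_in by (simp add: sum.remove)
  have t0: "acoef x g0 * chi g0 y = 1 / real n" by (simp add: acoef_def chi_def)
  have rest: "(\<Sum>h\<in>A - {g0}. acoef x h * chi h y) =
      (\<Sum>h\<in>A - {g0}. - 1 / real n * (if y = h then 1 else 0)) +
      (\<Sum>h\<in>A - {g0}. 1 / real n * (if y = g0 then 1 else 0)) +
      (\<Sum>h\<in>A - {g0}. (if h = x then 1 else 0) * ((if y = h then 1 else 0) - (if y = g0 then 1 else 0)))"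
  proof -
    have pt: "acoef x h * chi h y = - 1 / real n * (if y = h then 1 else 0) + 1 / real n * (if y = g0 then 1 else 0)
        + (if h = x then 1 else 0) * ((if y = h then 1 else 0) - (if y = g0 then 1 else 0))" if h: "h \<in> A - {g0}" for h
      using h by (auto simp: acoef_def chi_def algebra_simps)
    have "(\<Sum>h\<in>A - {g0}. acoef x h * chi h y) = (\<Sum>h\<in>A - {g0}. - 1 / real n * (if y = h then 1 else 0) + 1 / real n * (if y = g0 then 1 else 0)
        + (if h = x then 1 else 0) * ((if y = h then 1 else 0) - (if y = g0 then 1 else 0)))"
      by (rule sum.cong[OF refl]) (rule pt)
    then show ?thesis by (simp only: sum.distrib)
  qed
  have s1: "(\<Sum>h\<in>A - {g0}. - 1 / real n * (if y = h then 1 else 0)) = (if y \<noteq> g0 then - 1 / real n else 0)"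
  proof -
    have d: "(\<Sum>h\<in>A - {g0}. (if y = h then 1 else 0::real)) = (if y \<noteq> g0 then 1 else 0)"
      using y fA' by (simp add: sum.delta')
    have "(\<Sum>h\<in>A - {g0}. - 1 / real n * (if y = h then 1 else 0)) = - 1 / real n * (\<Sum>h\<in>A - {g0}. (if y = h then 1 else 0::real))"
      by (simp only: sum_distrib_left)
    then show ?thesis unfolding d by simp
  qed
  have s2: "(\<Sum>h\<in>A - {g0}. 1 / real n * (if y = g0 then 1 else 0)) = (if y = g0 then (real n - 1) / real n else 0)"
    using cA' n1 by simp
  have s3: "(\<Sum>h\<in>A - {g0}. (if h = x then 1 else 0) * ((if y = h then 1 else 0) - (if y = g0 then 1 else 0))) =
      (if x \<noteq> g0 then (if y = x then 1 else 0) - (if y = g0 then 1 else 0) else (0::real))"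
  proof -
    have "(\<Sum>h\<in>A - {g0}. (if h = x then 1 else 0) * ((if y = h then 1 else 0) - (if y = g0 then 1 else 0))) =
        (\<Sum>h\<in>A - {g0}. if h = x then (if y = x then 1 else 0) - (if y = g0 then 1 else 0) else (0::real))"
      by (rule sum.cong) auto
    also have "\<dots> = (if x \<in> A - {g0} then (if y = x then 1 else 0) - (if y = g0 then 1 else 0) else 0)"
      by (rule sum.delta[OF fA'])
    also have "(x \<in> A - {g0}) = (x \<noteq> g0)" using x by auto
    finally show ?thesis .
  qed
  show ?thesis
    unfolding split t0 rest s1 s2 s3 using np by (auto simp: field_simps)
qed

lemma phi_gr_val:
  assumes r: "\<rho> \<in> faces k A m" and I: "fst ` \<rho> = I" and g: "gr I p \<in> faces k A m"
  shows "phi m (gr I p) \<rho> = (\<Prod>i\<in>I. chi (p i) (crd \<rho> i))"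
proof -
  have "phi m (gr I p) \<rho> = (\<Prod>w\<in>\<rho>. chi (crd (gr I p) (fst w)) (snd w))"
    using r I by (simp add: phi_def fst_gr)
  also have "\<dots> = (\<Prod>w\<in>\<rho>. chi (p (fst w)) (crd \<rho> (fst w)))"
  proof (rule prod.cong[OF refl])
    fix w assume w: "w \<in> \<rho>"
    have "fst w \<in> I" using w I by auto
    then show "chi (crd (gr I p) (fst w)) (snd w) = chi (p (fst w)) (crd \<rho> (fst w))"
      using crd_gr[OF g] crd_mem[OF r w] by simp
  qed
  also have "\<dots> = (\<Prod>i\<in>fst ` \<rho>. chi (p i) (crd \<rho> i))"
    using face_inj[OF r] by (subst prod.reindex) (auto simp: inj_on_def)
  finally show ?thesis using I by simp
qed

lemma prod_ind: "finite I \<Longrightarrow> (\<Prod>i\<in>I. if P i then 1 else (0::real)) = (if \<forall>i\<in>I. P i then 1 else 0)"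
proof (cases "\<forall>i\<in>I. P i")
  case True then show ?thesis by simp
next
  case False
  assume "finite I"
  then show ?thesis using False by (subst prod_zero) auto
qed

lemma delta_span:
  assumes S: "\<sigma> \<in> faces k A m"
  shows "delta \<sigma> \<in> cs.span (phi m ` faces k A m)"
proof -
  define I where "I = fst ` \<sigma>"
  have fI: "finite I" using face_finite[OF finA S] by (simp add: I_def)
  have IJ: "I \<subseteq> {1..k+1}" using face_fst_sub[OF S] by (simp add: I_def)
  have cI: "card I = m" using face_fst_card[OF S] by (simp add: I_def)
  have grF: "gr I p \<in> faces k A m" if "p \<in> PiE I (\<lambda>_. A)" for p
    using that by (intro gr_face[OF IJ cI]) auto
  define c where "c p = (\<Prod>i\<in>I. acoef (crd \<sigma> i) (p i))" for p
  have eq: "delta \<sigma> = (\<Sum>p\<in>PiE I (\<lambda>_. A). cscale (c p) (phi m (gr I p)))"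
  proof
    fix \<rho>
    have R: "(\<Sum>p\<in>PiE I (\<lambda>_. A). cscale (c p) (phi m (gr I p))) \<rho> = (\<Sum>p\<in>PiE I (\<lambda>_. A). c p * phi m (gr I p) \<rho>)"
      by (simp add: sum_fun_apply cscale_apply)
    show "delta \<sigma> \<rho> = (\<Sum>p\<in>PiE I (\<lambda>_. A). cscale (c p) (phi m (gr I p))) \<rho>"
    proof (cases "\<rho> \<in> faces k A m \<and> fst ` \<rho> = I")
      case True
      then have r: "\<rho> \<in> faces k A m" and rI: "fst ` \<rho> = I" by auto
      have "(\<Sum>p\<in>PiE I (\<lambda>_. A). c p * phi m (gr I p) \<rho>) =
            (\<Sum>p\<in>PiE I (\<lambda>_. A). \<Prod>i\<in>I. acoef (crd \<sigma> i) (p i) * chi (p i) (crd \<rho> i))"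
        by (rule sum.cong[OF refl]) (simp add: c_def phi_gr_val[OF r rI grF] prod.distrib)
      also have "\<dots> = (\<Prod>i\<in>I. \<Sum>h\<in>A. acoef (crd \<sigma> i) h * chi h (crd \<rho> i))"
        using fI finA by (subst prod_sum_PiE) auto
      also have "\<dots> = (\<Prod>i\<in>I. if crd \<rho> i = crd \<sigma> i then 1 else 0)"
      proof (rule prod.cong[OF refl])
        fix i assume i: "i \<in> I"
        have "crd \<sigma> i \<in> A" using crd_A[OF S] i by (simp add: I_def)
        moreover have "crd \<rho> i \<in> A" using crd_A[OF r] i rI by simp
        ultimately show "(\<Sum>h\<in>A. acoef (crd \<sigma> i) h * chi h (crd \<rho> i)) = (if crd \<rho> i = crd \<sigma> i then 1 else 0)"
          by (rule expand1)
      qed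
      also have "\<dots> = (if \<forall>i\<in>I. crd \<rho> i = crd \<sigma> i then 1 else 0)" using prod_ind[OF fI] .
      also have "\<dots> = delta \<sigma> \<rho>"
      proof -
        have "(\<forall>i\<in>I. crd \<rho> i = crd \<sigma> i) \<longleftrightarrow> \<rho> = \<sigma>"
          using face_eq_crd[OF r S] rI by (auto simp: I_def)
        then show ?thesis by (simp add: delta_def)
      qed
      finally show ?thesis using R by simp
    next
      case False
      then have "\<rho> \<noteq> \<sigma>" using S by (auto simp: I_def)
      moreover have "phi m (gr I p) \<rho> = 0" for p using False by (auto simp: phi_def fst_gr)
      ultimately show ?thesis using R by (simp add: delta_def)
    qed
  qed
  have "(\<Sum>p\<in>PiE I (\<lambda>_. A). cscale (c p) (phi m (gr I p))) \<in> cs.span (phi m ` faces k A m)"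
  proof (intro cs.span_sum cs.span_scale)
    fix p assume "p \<in> PiE I (\<lambda>_. A)"
    then show "phi m (gr I p) \<in> cs.span (phi m ` faces k A m)" using grF by (intro cs.span_base) auto
  qed
  then show ?thesis using eq by simp
qed

lemma phi_basis:
  shows "cochains k A m = cs.span (phi m ` faces k A m)"
    and "cs.independent (phi m ` faces k A m)"
    and "inj_on (phi m) (faces k A m)"
proof -
  have sub: "phi m ` faces k A m \<subseteq> cochains k A m" using phi_in by auto
  have "cochains k A m \<subseteq> cs.span (phi m ` faces k A m)"
  proof -
    have "delta ` faces k A m \<subseteq> cs.span (phi m ` faces k A m)" using delta_span by auto
    then have "cs.span (delta ` faces k A m) \<subseteq> cs.span (phi m ` faces k A m)"
      using cs.span_minimal cs.subspace_span by blast
    then show ?thesis using cochains_span by simp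
  qed
  moreover have "cs.span (phi m ` faces k A m) \<subseteq> cochains k A m"
    using sub cochains_subspace by (intro cs.span_minimal) auto
  ultimately show "cochains k A m = cs.span (phi m ` faces k A m)" by auto
  have fin: "finite (phi m ` faces k A m)" using finite_faces[OF finA] by simp
  have cle: "card (phi m ` faces k A m) \<le> cs.dim (cochains k A m)"
    using card_image_le[OF finite_faces[OF finA]] dim_cochains by simp
  note ic = indep_of_card_le_dim[OF sub \<open>cochains k A m \<subseteq> cs.span (phi m ` faces k A m)\<close> fin cle]
  show "cs.independent (phi m ` faces k A m)" using ic(1) .
  show "inj_on (phi m) (faces k A m)"
    using ic(2) dim_cochains finite_faces[OF finA] by (intro eq_card_imp_inj_on) auto
qed

end

lemma eig_dim_idx:
  fixes \<phi> :: "'i \<Rightarrow> ('x \<Rightarrow> real)"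
  assumes fX: "finite X" and inj: "inj_on \<phi> X" and ind: "cs.independent (\<phi> ` X)" and lL: "lin L"
    and eig: "\<And>x. x \<in> X \<Longrightarrow> L (\<phi> x) = cscale (lam x) (\<phi> x)"
  shows "cs.dim {v \<in> cs.span (\<phi> ` X). L v = cscale \<mu> v} = card {x\<in>X. lam x = \<mu>}"
proof -
  define lam' where "lam' b = lam (the_inv_into X \<phi> b)" for b
  have e: "lam' (\<phi> x) = lam x" if "x \<in> X" for x using the_inv_into_f_f[OF inj that] by (simp add: lam'_def)
  have "cs.dim {v \<in> cs.span (\<phi> ` X). L v = cscale \<mu> v} = card {b\<in>\<phi> ` X. lam' b = \<mu>}"
    by (rule eig_dim) (use fX ind lL eig e in auto)
  also have "{b\<in>\<phi> ` X. lam' b = \<mu>} = \<phi> ` {x\<in>X. lam x = \<mu>}" using e by auto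
  also have "card (\<phi> ` {x\<in>X. lam x = \<mu>}) = card {x\<in>X. lam x = \<mu>}"
    using inj by (intro card_image) (auto intro: inj_on_subset)
  finally show ?thesis .
qed

lemma eig_exists_idx:
  fixes \<phi> :: "'i \<Rightarrow> ('x \<Rightarrow> real)"
  assumes fX: "finite X" and inj: "inj_on \<phi> X" and ind: "cs.independent (\<phi> ` X)" and lL: "lin L"
    and eig: "\<And>x. x \<in> X \<Longrightarrow> L (\<phi> x) = cscale (lam x) (\<phi> x)"
    and v: "v \<in> cs.span (\<phi> ` X)" "v \<noteq> 0" "L v = cscale \<mu> v"
  shows "\<exists>x\<in>X. lam x = \<mu>"
proof -
  have "cs.dim {v \<in> cs.span (\<phi> ` X). L v = cscale \<mu> v} \<noteq> 0"
    by (rule dim_pos[of _ "\<phi> ` X" v]) (use fX v in auto)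
  then have "card {x\<in>X. lam x = \<mu>} \<noteq> 0" using eig_dim_idx[OF assms(1-5)] by simp
  then show ?thesis by (metis (mono_tags, lifting) Collect_empty_eq card.empty)
qed

context YG
begin

lemma z_le: "\<tau> \<in> faces k A m \<Longrightarrow> z \<tau> \<le> m"
  using face_card[of \<tau> k A m] face_finite[OF finA, of \<tau> k m] unfolding z_def
  by (metis (no_types, lifting) card_mono mem_Collect_eq subsetI)

lemma part_i_count:
  assumes j: "j \<le> k"
  shows "eig_mult (cochains k A (j+1)) (lap k A (j+1)) (real t * real n) = card {\<tau> \<in> faces k A (j+1). k - j + z \<tau> = t}"
proof -
  note B = phi_basis[of "j+1"]
  have eig: "\<And>\<tau>. \<tau> \<in> faces k A (j+1) \<Longrightarrow> lap k A (j+1) (phi (j+1) \<tau>) = cscale (real n * real (k - j + z \<tau>)) (phi (j+1) \<tau>)"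
    using phi_eig[of _ j] by simp
  have "eig_mult (cochains k A (j+1)) (lap k A (j+1)) (real t * real n) =
      card {\<tau> \<in> faces k A (j+1). real n * real (k - j + z \<tau>) = real t * real n}"
    unfolding eig_mult_def B(1)
    by (rule eig_dim_idx[OF finite_faces[OF finA] B(3) B(2) lin_lap eig])
  also have "{\<tau> \<in> faces k A (j+1). real n * real (k - j + z \<tau>) = real t * real n} = {\<tau> \<in> faces k A (j+1). k - j + z \<tau> = t}"
    using n_pos by (auto simp: mult.commute)
  finally show ?thesis .
qed

lemma part_i_eig:
  assumes j: "j \<le> k" and e: "eigenvalue_on (cochains k A (j+1)) (lap k A (j+1)) \<mu>"
  shows "\<exists>t. k - j \<le> t \<and> t \<le> k + 1 \<and> \<mu> = real t * real n"
proof -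
  note B = phi_basis[of "j+1"]
  have eig: "\<And>\<tau>. \<tau> \<in> faces k A (j+1) \<Longrightarrow> lap k A (j+1) (phi (j+1) \<tau>) = cscale (real n * real (k - j + z \<tau>)) (phi (j+1) \<tau>)"
    using phi_eig[of _ j] by simp
  obtain v where v: "v \<in> cochains k A (j+1)" "v \<noteq> 0" "lap k A (j+1) v = cscale \<mu> v"
    using e by (auto simp: eigenvalue_on_def)
  obtain \<tau> where \<tau>: "\<tau> \<in> faces k A (j+1)" "real n * real (k - j + z \<tau>) = \<mu>"
    using eig_exists_idx[OF finite_faces[OF finA] B(3) B(2) lin_lap eig, of v \<mu>] v B(1) by auto
  have "z \<tau> \<le> j + 1" using z_le[OF \<tau>(1)] .
  then show ?thesis using \<tau> j by (intro exI[of _ "k - j + z \<tau>"]) auto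
qed

end

lemma binom_ident:
  assumes "j \<le> k" "s \<le> j + 1"
  shows "(k+1 choose (j+1)) * ((j+1) choose s) = (k+1 choose (k-j+s)) * ((k-j+s) choose (k-j))"
proof -
  have "(k+1 choose (k-j+s)) * ((k-j+s) choose (k-j)) = (k+1 choose (k-j)) * ((k+1-(k-j)) choose (k-j+s-(k-j)))"
    using assms by (intro choose_mult) auto
  also have "k+1-(k-j) = j+1" using assms by simp
  also have "k-j+s-(k-j) = s" by simp
  also have "(k+1 choose (k-j)) = (k+1 choose (j+1))"
    using binomial_symmetric[of "j+1" "k+1"] assms by simp
  finally show ?thesis by simp
qed

lemma count_fun:
  fixes I :: "nat set" and B :: "'a set" and g0 :: 'a
  assumes fI: "finite I" and fB: "finite B" and g: "g0 \<in> B"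
  shows "card {p \<in> PiE I (\<lambda>_. B). card {i\<in>I. p i = g0} = s} = (card I choose s) * (card B - 1) ^ (card I - s)"
proof -
  define Zs where "Zs = {Z. Z \<subseteq> I \<and> card Z = s}"
  define Sg where "Sg = Sigma Zs (\<lambda>Z. PiE (I - Z) (\<lambda>_. B - {g0}))"
  define F where "F = (\<lambda>(Z :: nat set, q :: nat \<Rightarrow> 'a). (\<lambda>i. if i \<in> Z then g0 else q i))"
  define G where "G = (\<lambda>p :: nat \<Rightarrow> 'a. ({i\<in>I. p i = g0}, restrict p (I - {i\<in>I. p i = g0})))"
  have bij: "bij_betw F Sg {p \<in> PiE I (\<lambda>_. B). card {i\<in>I. p i = g0} = s}"
  proof (rule bij_betw_byWitness[where f' = G])
    show "\<forall>a\<in>Sg. G (F a) = a"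
    proof
      fix a assume a: "a \<in> Sg"
      obtain Z q where aq: "a = (Z, q)" by (cases a)
      have Z: "Z \<subseteq> I" "q \<in> PiE (I - Z) (\<lambda>_. B - {g0})" using a aq by (auto simp: Sg_def Zs_def)
      have e: "{i\<in>I. (if i \<in> Z then g0 else q i) = g0} = Z"
        using Z by (auto simp: PiE_def Pi_def)
      show "G (F a) = a"
        unfolding aq F_def G_def using e Z by (auto simp: fun_eq_iff restrict_def PiE_def extensional_def)
    qed
    show "\<forall>a'\<in>{p \<in> PiE I (\<lambda>_. B). card {i\<in>I. p i = g0} = s}. F (G a') = a'"
    proof
      fix p assume p: "p \<in> {p \<in> PiE I (\<lambda>_. B). card {i\<in>I. p i = g0} = s}"
      show "F (G p) = p"
        unfolding F_def G_def using p by (auto simp: fun_eq_iff restrict_def PiE_def extensional_def)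
    qed
    show "F ` Sg \<subseteq> {p \<in> PiE I (\<lambda>_. B). card {i\<in>I. p i = g0} = s}"
    proof
      fix y assume "y \<in> F ` Sg"
      then obtain Z q where a: "(Z, q) \<in> Sg" "y = F (Z, q)" by auto
      have Z: "Z \<subseteq> I" "card Z = s" "q \<in> PiE (I - Z) (\<lambda>_. B - {g0})" using a by (auto simp: Sg_def Zs_def)
      have e: "{i\<in>I. (if i \<in> Z then g0 else q i) = g0} = Z"
        using Z by (auto simp: PiE_def Pi_def)
      have "(\<lambda>i. if i \<in> Z then g0 else q i) \<in> PiE I (\<lambda>_. B)"
        using Z g by (auto simp: PiE_def Pi_def extensional_def)
      then show "y \<in> {p \<in> PiE I (\<lambda>_. B). card {i\<in>I. p i = g0} = s}"
        using a(2) e Z(2) by (simp add: F_def)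
    qed
    show "G ` {p \<in> PiE I (\<lambda>_. B). card {i\<in>I. p i = g0} = s} \<subseteq> Sg"
    proof
      fix y assume "y \<in> G ` {p \<in> PiE I (\<lambda>_. B). card {i\<in>I. p i = g0} = s}"
      then obtain p where p: "p \<in> PiE I (\<lambda>_. B)" "card {i\<in>I. p i = g0} = s" "y = G p" by auto
      have "p \<in> Pi (I - {i\<in>I. p i = g0}) (\<lambda>_. B - {g0})" using p(1) by (auto simp: PiE_def Pi_def)
      then have "restrict p (I - {i\<in>I. p i = g0}) \<in> PiE (I - {i\<in>I. p i = g0}) (\<lambda>_. B - {g0})"
        by (simp add: restrict_PiE_iff)
      then show "y \<in> Sg" using p by (auto simp: G_def Sg_def Zs_def)
    qed
  qed
  have "card {p \<in> PiE I (\<lambda>_. B). card {i\<in>I. p i = g0} = s} = card Sg"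
    using bij_betw_same_card[OF bij] by simp
  also have "\<dots> = (\<Sum>Z\<in>Zs. card (PiE (I - Z) (\<lambda>_. B - {g0})))"
    unfolding Sg_def using fI fB by (intro card_SigmaI) (auto simp: Zs_def intro: finite_subset finite_PiE)
  also have "\<dots> = (\<Sum>Z\<in>Zs. (card B - 1) ^ (card I - s))"
  proof (rule sum.cong[OF refl])
    fix Z assume "Z \<in> Zs"
    then have Z: "Z \<subseteq> I" "card Z = s" by (auto simp: Zs_def)
    have "card (I - Z) = card I - s" using Z fI by (simp add: card_Diff_subset finite_subset)
    then show "card (PiE (I - Z) (\<lambda>_. B - {g0})) = (card B - 1) ^ (card I - s)"
      using fI g fB by (simp add: card_PiE)
  qed
  also have "\<dots> = (card I choose s) * (card B - 1) ^ (card I - s)"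
    using n_subsets[OF fI, of s] by (simp add: Zs_def)
  finally show ?thesis .
qed

context YG
begin

lemma z_gr:
  "z (gr I p) = card {i\<in>I. p i = g0}"
proof -
  have "{x \<in> gr I p. snd x = g0} = (\<lambda>i. (i, p i)) ` {i\<in>I. p i = g0}" by (auto simp: gr_def)
  then show ?thesis unfolding z_def by (simp add: card_image inj_on_def)
qed

lemma count_faces:
  fixes P :: "'a vtx set \<Rightarrow> bool"
  shows "card {\<tau> \<in> faces k A m. P \<tau>} =
     (\<Sum>I\<in>{I. I \<subseteq> {1..k+1} \<and> card I = m}. card {p \<in> PiE I (\<lambda>_. A). P (gr I p)})"
proof -
  define Is where "Is = {I. I \<subseteq> {1..k+1} \<and> card I = m}"
  define Sg where "Sg = Sigma Is (\<lambda>I. {p \<in> PiE I (\<lambda>_. A). P (gr I p)})"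
  have img: "{\<tau> \<in> faces k A m. P \<tau>} = (\<lambda>(I, p). gr I p) ` Sg"
  proof
    show "{\<tau> \<in> faces k A m. P \<tau>} \<subseteq> (\<lambda>(I, p). gr I p) ` Sg"
    proof
      fix \<tau> assume t: "\<tau> \<in> {\<tau> \<in> faces k A m. P \<tau>}"
      then have T: "\<tau> \<in> faces k A m" "P \<tau>" by auto
      define I where "I = fst ` \<tau>"
      define p where "p = restrict (crd \<tau>) I"
      have "gr I p = gr I (crd \<tau>)" by (auto simp: gr_def p_def)
      then have e: "gr I p = \<tau>" using face_gr[OF T(1)] by (simp add: I_def)
      have "p \<in> PiE I (\<lambda>_. A)" using crd_A[OF T(1)] by (auto simp: p_def I_def)
      moreover have "I \<in> Is" using face_fst_sub[OF T(1)] face_fst_card[OF T(1)] by (simp add: Is_def I_def)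
      ultimately have "(I, p) \<in> Sg" using T(2) e by (simp add: Sg_def)
      then show "\<tau> \<in> (\<lambda>(I, p). gr I p) ` Sg" using e by (auto intro!: image_eqI[of _ _ "(I, p)"])
    qed
    show "(\<lambda>(I, p). gr I p) ` Sg \<subseteq> {\<tau> \<in> faces k A m. P \<tau>}"
      by (auto simp: Sg_def Is_def PiE_def Pi_def intro!: gr_face)
  qed
  have inj: "inj_on (\<lambda>(I, p). gr I p) Sg"
  proof (rule inj_onI)
    fix a b assume a: "a \<in> Sg" and b: "b \<in> Sg" and e: "(\<lambda>(I, p). gr I p) a = (\<lambda>(I, p). gr I p) b"
    obtain I p where ap: "a = (I, p)" by (cases a)
    obtain I' p' where bp: "b = (I', p')" by (cases b)
    have e': "gr I p = gr I' p'" using e ap bp by simp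
    then have II: "I = I'" using fst_gr[of I p] fst_gr[of I' p'] by simp
    have "p i = p' i" if i: "i \<in> I" for i
    proof -
      have "(i, p i) \<in> gr I' p'" using e' i by (auto simp: gr_def)
      then show ?thesis by (auto simp: gr_def)
    qed
    moreover have "p \<in> PiE I (\<lambda>_. A)" "p' \<in> PiE I (\<lambda>_. A)" using a b ap bp II by (auto simp: Sg_def)
    ultimately have "p = p'" by (intro PiE_ext) auto
    then show "a = b" using ap bp II by simp
  qed
  have "card {\<tau> \<in> faces k A m. P \<tau>} = card Sg" using img inj by (simp add: card_image)
  also have "\<dots> = (\<Sum>I\<in>Is. card {p \<in> PiE I (\<lambda>_. A). P (gr I p)})"
    unfolding Sg_def using finA by (intro card_SigmaI) (auto simp: Is_def intro: finite_subset finite_PiE)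
  finally show ?thesis by (simp add: Is_def)
qed

lemma part_i_formula:
  assumes j: "j \<le> k"
  shows "card {\<tau> \<in> faces k A (j+1). k - j + z \<tau> = t} = (k+1 choose t) * (t choose (k-j)) * (n-1)^(k+1-t)"
proof (cases "t < k - j")
  case True
  then have e: "{\<tau> \<in> faces k A (j+1). k - j + z \<tau> = t} = {}" by auto
  have "t choose (k - j) = 0" using True by simp
  then show ?thesis by (simp only: e card.empty)
next
  case False
  define s where "s = t - (k - j)"
  have ts: "t = k - j + s" using False by (simp add: s_def)
  have "card {\<tau> \<in> faces k A (j+1). k - j + z \<tau> = t} =
     (\<Sum>I\<in>{I. I \<subseteq> {1..k+1} \<and> card I = j+1}. card {p \<in> PiE I (\<lambda>_. A). k - j + z (gr I p) = t})"
    by (rule count_faces)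
  also have "\<dots> = (\<Sum>I\<in>{I. I \<subseteq> {1..k+1} \<and> card I = j+1}. ((j+1) choose s) * (n-1)^(j+1-s))"
  proof (rule sum.cong[OF refl])
    fix I assume "I \<in> {I. I \<subseteq> {1..k+1} \<and> card I = j+1}"
    then have I: "I \<subseteq> {1..k+1}" "card I = j+1" by auto
    have fI: "finite I" using I(1) finite_subset by blast
    have "{p \<in> PiE I (\<lambda>_. A). k - j + z (gr I p) = t} = {p \<in> PiE I (\<lambda>_. A). card {i\<in>I. p i = g0} = s}"
      using ts by (auto simp: z_gr)
    then show "card {p \<in> PiE I (\<lambda>_. A). k - j + z (gr I p) = t} = ((j+1) choose s) * (n-1)^(j+1-s)"
      using count_fun[OF fI finA g0_in, of s] I(2) by simp
  qed
  also have "\<dots> = (k+1 choose (j+1)) * ((j+1) choose s) * (n-1)^(j+1-s)"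
    using n_subsets[of "{1..k+1}" "j+1"] by simp
  also have "\<dots> = (k+1 choose t) * (t choose (k-j)) * (n-1)^(k+1-t)"
  proof (cases "s \<le> j + 1")
    case True
    have "j + 1 - s = k + 1 - t" using ts j True by simp
    then show ?thesis using binom_ident[OF j True] ts by simp
  next
    case False
    then have "t > k + 1" using ts j by simp
    then have z2: "(k+1 choose t) = 0" by (intro binomial_eq_0) simp
    have z1: "((j+1) choose s) = 0" using False by (intro binomial_eq_0) simp
    show ?thesis by (simp only: z1 z2 mult_zero_left mult_zero_right)
  qed
  finally show ?thesis .
qed

end

context YG
begin

definition ip :: "nat \<Rightarrow> 'a cochain \<Rightarrow> 'a cochain \<Rightarrow> real" where
  "ip m f g = (\<Sum>S\<in>faces k A m. f S * g S)"

lemma ip_adj: "ip (Suc m) (cobound k A m f) g = ip m f (cobound_adj k A m g)"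
  unfolding ip_def by (rule cobound_adjoint[OF finA])

lemma ip_zero_left: "ip m 0 g = 0" by (simp add: ip_def)
lemma ip_zero_right: "ip m f 0 = 0" by (simp add: ip_def)

lemma ip_pos: "f \<in> cochains k A m \<Longrightarrow> ip m f f = 0 \<Longrightarrow> f = 0"
proof -
  assume f: "f \<in> cochains k A m" and z: "ip m f f = 0"
  have "\<forall>S\<in>faces k A m. f S * f S = 0"
    using z finite_faces[OF finA] unfolding ip_def
    by (subst (asm) sum_nonneg_eq_0_iff) auto
  then show "f = 0" using f by (auto simp: cochains_def fun_eq_iff)
qed

lemma DD: "cobound k A (Suc m) (cobound k A m f) = 0"
  using cobound_cobound[OF finA] by (simp add: zero_fun_def)

lemma DsDs: "cobound_adj k A m (cobound_adj k A (Suc m) g) = 0"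
proof -
  define h where "h = cobound_adj k A m (cobound_adj k A (Suc m) g)"
  have "ip m h h = ip (Suc m) (cobound k A m h) (cobound_adj k A (Suc m) g)"
    unfolding h_def[of] by (simp add: ip_adj h_def)
  also have "\<dots> = ip (Suc (Suc m)) (cobound k A (Suc m) (cobound k A m h)) g"
    by (simp add: ip_adj)
  also have "\<dots> = 0" by (simp add: DD ip_zero_left)
  finally have "ip m h h = 0" .
  then show ?thesis using ip_pos[OF cobound_adj_in] unfolding h_def by blast
qed

lemma lapup_D: "lap_up k A (Suc j) (cobound k A j w) = 0"
  by (simp add: lap_up_def DD lin_zero[OF lin_cobound_adj])

lemma lapdown_Ds: "lap_down k A (Suc j) (cobound_adj k A (Suc j) w) = 0"
  by (simp add: lap_down_def DsDs lin_zero[OF lin_cobound])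

lemma lap_D: "lap k A (Suc j) (cobound k A j w) = lap_down k A (Suc j) (cobound k A j w)"
  using lapup_D by (simp add: lap_def)

lemma lap_Ds: "lap k A (Suc j) (cobound_adj k A (Suc j) w) = lap_up k A (Suc j) (cobound_adj k A (Suc j) w)"
  using lapdown_Ds by (simp add: lap_def)

definition Ud :: "real \<Rightarrow> nat \<Rightarrow> 'a cochain set" where
  "Ud \<mu> j = {v \<in> cobound k A j ` cochains k A j. lap_down k A (Suc j) v = cscale \<mu> v}"

definition Uu :: "real \<Rightarrow> nat \<Rightarrow> 'a cochain set" where
  "Uu \<mu> j = {v \<in> cobound_adj k A (Suc j) ` cochains k A (Suc (Suc j)). lap_up k A (Suc j) v = cscale \<mu> v}"

definition Wm :: "real \<Rightarrow> nat \<Rightarrow> 'a cochain set" where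
  "Wm \<mu> j = {v \<in> cochains k A (Suc j). lap k A (Suc j) v = cscale \<mu> v}"

lemma Ud_sub: "Ud \<mu> j \<subseteq> Wm \<mu> j"
  using cobound_in by (auto simp: Ud_def Wm_def lap_D)

lemma Uu_sub: "Uu \<mu> j \<subseteq> Wm \<mu> j"
  using cobound_adj_in by (auto simp: Uu_def Wm_def lap_Ds)

lemma Ud_subspace: "cs.subspace (Ud \<mu> j)"
  unfolding Ud_def by (intro subspace_eig lin_lap_down subspace_image lin_cobound cochains_subspace)

lemma Uu_subspace: "cs.subspace (Uu \<mu> j)"
  unfolding Uu_def by (intro subspace_eig lin_lap_up subspace_image lin_cobound_adj cochains_subspace)

lemma Wm_fin: "Wm \<mu> j \<subseteq> cs.span (delta ` faces k A (Suc j))"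
  using finite_span_cochains(1) by (auto simp: Wm_def)

lemma lapdown_lapup: "lap_down k A (Suc j) (lap_up k A (Suc j) w) = 0"
  by (simp add: lap_down_def lap_up_def DsDs lin_zero[OF lin_cobound])

lemma lapup_lapdown: "lap_up k A (Suc j) (lap_down k A (Suc j) w) = 0"
  by (simp add: lap_down_def lap_up_def DD lin_zero[OF lin_cobound_adj])

lemma cscale_inv:
  assumes "\<mu> \<noteq> 0" shows "cscale (1/\<mu>) (cscale \<mu> w) = w"
  using assms by (simp add: cscale_def fun_eq_iff)

lemma dim_Wm_split:
  assumes mu: "\<mu> \<noteq> 0"
  shows "cs.dim (Wm \<mu> j) = cs.dim (Ud \<mu> j) + cs.dim (Uu \<mu> j)"
proof (rule dim_direct_sum[OF Ud_subspace Uu_subspace Ud_sub Uu_sub _ _ Wm_fin])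
  show "finite (delta ` faces k A (Suc j))" using finite_span_cochains(2) .
next
  fix w assume w: "w \<in> Wm \<mu> j"
  then have lw: "lap k A (Suc j) w = cscale \<mu> w" by (simp add: Wm_def)
  define u where "u = cscale (1/\<mu>) (lap_down k A (Suc j) w)"
  define u' where "u' = cscale (1/\<mu>) (lap_up k A (Suc j) w)"
  have sum: "w = u + u'"
  proof -
    have "u + u' = cscale (1/\<mu>) (lap k A (Suc j) w)"
      by (simp add: u_def u'_def lap_def cs.scale_right_distrib)
    then have "u + u' = cscale (1/\<mu>) (cscale \<mu> w)" by (simp only: lw)
    then show ?thesis by (simp only: cscale_inv[OF mu])
  qed
  have ld: "lap_down k A (Suc j) (lap_down k A (Suc j) w) = cscale \<mu> (lap_down k A (Suc j) w)"
  proof -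
    have "lap_down k A (Suc j) (lap k A (Suc j) w) = lap_down k A (Suc j) (lap_down k A (Suc j) w)"
      by (simp add: lap_def lin_add[OF lin_lap_down] lapdown_lapup)
    then show ?thesis using lw lin_scale[OF lin_lap_down] by simp
  qed
  have lu: "lap_up k A (Suc j) (lap_up k A (Suc j) w) = cscale \<mu> (lap_up k A (Suc j) w)"
  proof -
    have "lap_up k A (Suc j) (lap k A (Suc j) w) = lap_up k A (Suc j) (lap_up k A (Suc j) w)"
      by (simp add: lap_def lin_add[OF lin_lap_up] lapup_lapdown)
    then show ?thesis using lw lin_scale[OF lin_lap_up] by simp
  qed
  have "u \<in> Ud \<mu> j"
  proof -
    have "u = cobound k A j (cscale (1/\<mu>) (cobound_adj k A j w))"
      by (simp add: u_def lap_down_def lin_scale[OF lin_cobound])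
    moreover have "cscale (1/\<mu>) (cobound_adj k A j w) \<in> cochains k A j"
      using cobound_adj_in cochains_subspace cs.subspace_scale by blast
    moreover have "lap_down k A (Suc j) u = cscale \<mu> u"
      by (simp add: u_def lin_scale[OF lin_lap_down] ld cs.scale_left_commute)
    ultimately show ?thesis by (auto simp: Ud_def)
  qed
  moreover have "u' \<in> Uu \<mu> j"
  proof -
    have "u' = cobound_adj k A (Suc j) (cscale (1/\<mu>) (cobound k A (Suc j) w))"
      by (simp add: u'_def lap_up_def lin_scale[OF lin_cobound_adj])
    moreover have "cscale (1/\<mu>) (cobound k A (Suc j) w) \<in> cochains k A (Suc (Suc j))"
      using cobound_in cochains_subspace cs.subspace_scale by blast
    moreover have "lap_up k A (Suc j) u' = cscale \<mu> u'"
      by (simp add: u'_def lin_scale[OF lin_lap_up] lu cs.scale_left_commute)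
    ultimately show ?thesis by (auto simp: Uu_def)
  qed
  ultimately show "\<exists>u\<in>Ud \<mu> j. \<exists>u'\<in>Uu \<mu> j. w = u + u'" using sum by blast
next
  fix x assume x1: "x \<in> Ud \<mu> j" and x2: "x \<in> Uu \<mu> j"
  obtain a where a: "x = cobound k A j a" using x1 by (auto simp: Ud_def)
  obtain b where b: "x = cobound_adj k A (Suc j) b" using x2 by (auto simp: Uu_def)
  have "ip (Suc j) x x = ip (Suc j) (cobound k A j a) (cobound_adj k A (Suc j) b)" using a b by simp
  also have "\<dots> = ip (Suc (Suc j)) (cobound k A (Suc j) (cobound k A j a)) b" by (simp add: ip_adj)
  also have "\<dots> = 0" by (simp add: DD ip_zero_left)
  finally show "x = 0" using ip_pos[of x "Suc j"] a cobound_in by auto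
qed

lemma dim_Uu_Ud:
  assumes mu: "\<mu> \<noteq> 0"
  shows "cs.dim (Uu \<mu> j) = cs.dim (Ud \<mu> (Suc j))"
proof -
  let ?D = "cobound k A (Suc j)"
  have inj: "inj_on ?D (Uu \<mu> j)"
  proof (rule inj_onI)
    fix v v' assume v: "v \<in> Uu \<mu> j" and v': "v' \<in> Uu \<mu> j" and e: "?D v = ?D v'"
    have "cscale \<mu> v = lap_up k A (Suc j) v" using v by (simp add: Uu_def)
    also have "\<dots> = lap_up k A (Suc j) v'" using e by (simp add: lap_up_def)
    also have "\<dots> = cscale \<mu> v'" using v' by (simp add: Uu_def)
    finally show "v = v'" using mu by simp
  qed
  have img: "?D ` Uu \<mu> j = Ud \<mu> (Suc j)"
  proof
    show "?D ` Uu \<mu> j \<subseteq> Ud \<mu> (Suc j)"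
    proof
      fix y assume "y \<in> ?D ` Uu \<mu> j"
      then obtain v where v: "v \<in> Uu \<mu> j" "y = ?D v" by auto
      have vc: "v \<in> cochains k A (Suc j)" using v(1) cobound_adj_in by (auto simp: Uu_def)
      have "lap_down k A (Suc (Suc j)) y = ?D (lap_up k A (Suc j) v)"
        by (simp add: v(2) lap_down_def lap_up_def)
      also have "\<dots> = cscale \<mu> y" using v by (simp add: Uu_def lin_scale[OF lin_cobound])
      finally show "y \<in> Ud \<mu> (Suc j)" using vc v(2) by (auto simp: Ud_def)
    qed
    show "Ud \<mu> (Suc j) \<subseteq> ?D ` Uu \<mu> j"
    proof
      fix y assume y: "y \<in> Ud \<mu> (Suc j)"
      then have ly: "lap_down k A (Suc (Suc j)) y = cscale \<mu> y" by (simp add: Ud_def)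
      obtain w where w: "w \<in> cochains k A (Suc j)" "y = ?D w" using y by (auto simp: Ud_def)
      define v where "v = cscale (1/\<mu>) (cobound_adj k A (Suc j) y)"
      have Dv: "?D v = y"
      proof -
        have "?D v = cscale (1/\<mu>) (lap_down k A (Suc (Suc j)) y)"
          by (simp add: v_def lin_scale[OF lin_cobound] lap_down_def)
        then have "?D v = cscale (1/\<mu>) (cscale \<mu> y)" by (simp only: ly)
        then show ?thesis by (simp only: cscale_inv[OF mu])
      qed
      have "v \<in> Uu \<mu> j"
      proof -
        have "v = cobound_adj k A (Suc j) (cscale (1/\<mu>) y)" by (simp add: v_def lin_scale[OF lin_cobound_adj])
        moreover have "cscale (1/\<mu>) y \<in> cochains k A (Suc (Suc j))"
          using w cobound_in cochains_subspace cs.subspace_scale by blast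
        moreover have "lap_up k A (Suc j) v = cscale \<mu> v"
        proof -
          have "lap_up k A (Suc j) v = cobound_adj k A (Suc j) y" by (simp add: lap_up_def Dv)
          also have "\<dots> = cscale \<mu> v" using mu by (simp add: v_def cscale_def fun_eq_iff)
          finally show ?thesis .
        qed
        ultimately show ?thesis by (auto simp: Uu_def)
      qed
      then show "y \<in> ?D ` Uu \<mu> j" using Dv by (auto intro!: image_eqI[of _ _ v])
    qed
  qed
  have "cs.dim (?D ` Uu \<mu> j) = cs.dim (Uu \<mu> j)"
    by (rule dim_inj_image[OF lin_cobound Uu_subspace inj _ finite_span_cochains(2)])
       (use Uu_sub Wm_fin in blast)
  then show ?thesis using img by simp
qed

lemma lapdown_inj:
  assumes v: "v \<in> cobound k A j ` cochains k A j" and l: "lap_down k A (Suc j) v = 0"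
  shows "v = 0"
proof -
  obtain w where w: "v = cobound k A j w" using v by auto
  define u where "u = cobound_adj k A j v"
  have "ip j u u = ip (Suc j) (cobound k A j u) v" by (simp add: ip_adj u_def)
  also have "\<dots> = 0" using l by (simp add: u_def lap_down_def ip_zero_left)
  finally have "u = 0" using ip_pos[OF cobound_adj_in] by (simp add: u_def)
  have "ip (Suc j) v v = ip j w u" using w by (simp add: ip_adj u_def)
  also have "\<dots> = 0" using \<open>u = 0\<close> by (simp add: ip_zero_right)
  finally show "v = 0" using ip_pos[of v "Suc j"] w cobound_in by auto
qed

end

context YG
begin

lemma faces0: "faces k A 0 = {{}}"
proof -
  have "S = {}" if "S \<in> faces k A 0" for S
    using that face_finite[OF finA that] by (simp add: faces_def)
  moreover have "{} \<in> faces k A 0" by (simp add: faces_def)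
  ultimately show ?thesis by blast
qed

definition one :: "'a cochain" where "one = cobound k A 0 (delta {})"

lemma vsign_single: "vsign v {v} = 1"
proof -
  have e: "{w \<in> {v}. fst w < fst v} = {}" by auto
  show ?thesis unfolding vsign_def e by simp
qed

lemma one_val: "one T = (if T \<in> faces k A 1 then 1 else 0)"
proof (cases "T \<in> faces k A 1")
  case True
  then obtain v where v: "T = {v}" using face_card[OF True] by (metis card_1_singletonE)
  show ?thesis using True by (simp add: one_def cobound_def v delta_def vsign_single)
next
  case False then show ?thesis by (simp add: one_def cobound_def)
qed

lemma single_face: "{v} \<in> faces k A (Suc 0) \<longleftrightarrow> v \<in> join_vertices k A"
  by (simp add: faces_def)

lemma card_join: "card (join_vertices k A) = (k+1) * n"
  by (simp add: join_vertices_def card_cartesian_product)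

lemma Ds_one: "cobound_adj k A 0 one = cscale (real ((k+1) * n)) (delta {})"
proof
  fix S
  show "cobound_adj k A 0 one S = cscale (real ((k+1) * n)) (delta {}) S"
  proof (cases "S = {}")
    case True
    have e: "{v \<in> join_vertices k A - {}. insert v {} \<in> faces k A (0 + 1)} = join_vertices k A"
      by (auto simp: single_face)
    have "cobound_adj k A 0 one S = (\<Sum>v\<in>join_vertices k A. vsign v {v} * one {v})"
      using True by (simp only: cobound_adj_def faces0 e) simp
    also have "\<dots> = real (card (join_vertices k A))"
      by (simp add: vsign_single one_val single_face)
    finally show ?thesis using True card_join by (simp add: cscale_apply delta_def)
  next
    case False
    then show ?thesis by (simp add: cobound_adj_def faces0 cscale_apply delta_def)
  qed
qed

lemma lapdown_one: "lap_down k A (Suc 0) one = cscale (real ((k+1) * n)) one"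
proof -
  have "lap_down k A (Suc 0) one = cobound k A 0 (cobound_adj k A 0 one)" by (simp add: lap_down_def)
  also have "\<dots> = cobound k A 0 (cscale (real ((k+1) * n)) (delta {}))" by (simp only: Ds_one)
  also have "\<dots> = cscale (real ((k+1) * n)) one" by (simp only: lin_scale[OF lin_cobound] one_def)
  finally show ?thesis .
qed

lemma one_nz: "one \<noteq> 0"
proof
  assume "one = 0"
  then have "one {(1, g0)} = 0" by simp
  moreover have "{(1, g0)} \<in> faces k A 1" using g0_in by (simp add: single_face join_vertices_def)
  ultimately show False by (simp add: one_val)
qed

lemma imD0: "cobound k A 0 ` cochains k A 0 = cs.span {one}"
proof
  show "cobound k A 0 ` cochains k A 0 \<subseteq> cs.span {one}"
  proof
    fix y assume "y \<in> cobound k A 0 ` cochains k A 0"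
    then obtain f where f: "f \<in> cochains k A 0" "y = cobound k A 0 f" by auto
    have "f = cscale (f {}) (delta {})" using cochain_expand[OF f(1)] by (simp add: faces0)
    then have "y = cscale (f {}) one" using f(2) by (metis lin_scale[OF lin_cobound] one_def)
    then show "y \<in> cs.span {one}" by (simp add: cs.span_scale cs.span_base)
  qed
  show "cs.span {one} \<subseteq> cobound k A 0 ` cochains k A 0"
  proof
    fix y assume "y \<in> cs.span {one}"
    then obtain c where c: "y = cscale c one" by (auto simp: cs.span_singleton)
    have "cscale c (delta {}) \<in> cochains k A 0"
      using delta_in[of "{}" 0] faces0 cochains_subspace cs.subspace_scale by blast
    moreover have "y = cobound k A 0 (cscale c (delta {}))" using c by (simp add: lin_scale[OF lin_cobound] one_def)
    ultimately show "y \<in> cobound k A 0 ` cochains k A 0" by blast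
  qed
qed

lemma dim_Ud0: "cs.dim (Ud \<mu> 0) = (if \<mu> = real ((k+1) * n) then 1 else 0)"
proof -
  have "cs.dim (Ud \<mu> 0) = cs.dim {v \<in> cs.span {one}. lap_down k A (Suc 0) v = cscale \<mu> v}"
    by (simp add: Ud_def imD0)
  also have "\<dots> = card {b \<in> {one}. real ((k+1) * n) = \<mu>}"
    by (rule eig_dim[where lam = "\<lambda>_. real ((k+1) * n)"])
       (auto simp: lin_lap_down lapdown_one one_nz)
  finally show ?thesis by auto
qed

lemma dimW:
  assumes j: "j \<le> k"
  shows "cs.dim (Wm (real t * real n) j) = (k+1 choose t) * (t choose (k-j)) * (n-1)^(k+1-t)"
  using part_i_count[OF j, of t] part_i_formula[OF j, of t] by (simp add: eig_mult_def Wm_def)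

lemma a_formula:
  "j \<le> k \<Longrightarrow> 1 \<le> t \<Longrightarrow> cs.dim (Ud (real t * real n) j) = (k+1 choose t) * ((t-1) choose (k-j)) * (n-1)^(k+1-t)"
proof (induction j)
  case 0
  have "(real t * real n = real ((k+1) * n)) \<longleftrightarrow> t * n = (k+1) * n"
    by (simp only: of_nat_mult[symmetric] of_nat_eq_iff)
  also have "\<dots> \<longleftrightarrow> t = k + 1" by (rule mult_right_cancel) (use n_pos in simp)
  finally have e: "(real t * real n = real ((k+1) * n)) \<longleftrightarrow> t = k + 1" .
  show ?case
  proof (cases "t = k + 1")
    case True then show ?thesis using dim_Ud0 e by simp
  next
    case False
    have "(k+1 choose t) * ((t-1) choose k) = 0"
    proof (cases "t \<le> k")
      case True then have "(t-1) choose k = 0" using 0 by (intro binomial_eq_0) simp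
      then show ?thesis by simp
    next
      case False then have "(k+1 choose t) = 0" using \<open>t \<noteq> k + 1\<close> by (intro binomial_eq_0) simp
      then show ?thesis by simp
    qed
    then show ?thesis using dim_Ud0 e False by simp
  qed
next
  case (Suc j)
  have j: "j < k" using Suc.prems by simp
  have mu: "real t * real n \<noteq> 0" using Suc.prems n_pos by simp
  have IH: "cs.dim (Ud (real t * real n) j) = (k+1 choose t) * ((t-1) choose (k-j)) * (n-1)^(k+1-t)"
    using Suc by simp
  have W: "cs.dim (Wm (real t * real n) j) = (k+1 choose t) * (t choose (k-j)) * (n-1)^(k+1-t)"
    using dimW j by simp
  obtain t' where t': "t = Suc t'" using Suc.prems by (cases t) auto
  obtain r where r: "k - j = Suc r" using j by (cases "k - j") auto
  have kr: "k - Suc j = r" using r by simp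
  have "cs.dim (Ud (real t * real n) (Suc j)) = cs.dim (Uu (real t * real n) j)"
    using dim_Uu_Ud[OF mu] by simp
  also have "\<dots> = cs.dim (Wm (real t * real n) j) - cs.dim (Ud (real t * real n) j)"
    using dim_Wm_split[OF mu, of j] by simp
  also have "\<dots> = (k+1 choose t) * ((t' choose r) + (t' choose Suc r)) * (n-1)^(k+1-t)
                 - (k+1 choose t) * (t' choose Suc r) * (n-1)^(k+1-t)"
  proof -
    have b1: "t choose (k-j) = (t' choose r) + (t' choose Suc r)" using t' r by simp
    have b2: "(t-1) choose (k-j) = t' choose Suc r" using t' r by simp
    show ?thesis unfolding W IH b1 b2 ..
  qed
  also have "\<dots> = (k+1 choose t) * (t' choose r) * (n-1)^(k+1-t)"
    by (simp add: distrib_left distrib_right)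
  also have "t' choose r = (t-1) choose (k - Suc j)" using t' kr by simp
  finally show ?case .
qed

lemma b_formula:
  assumes "j < k" "1 \<le> t"
  shows "cs.dim (Uu (real t * real n) j) = (k+1 choose t) * ((t-1) choose (k-j-1)) * (n-1)^(k+1-t)"
proof -
  have mu: "real t * real n \<noteq> 0" using assms n_pos by simp
  have "cs.dim (Uu (real t * real n) j) = cs.dim (Ud (real t * real n) (Suc j))" using dim_Uu_Ud[OF mu] .
  also have "\<dots> = (k+1 choose t) * ((t-1) choose (k - Suc j)) * (n-1)^(k+1-t)"
    using a_formula[of "Suc j" t] assms by simp
  finally show ?thesis by simp
qed

end

context YG
begin

lemma part_ii_down_eig:
  assumes j: "j \<le> k" and e: "eigenvalue_on (cobound k A j ` cochains k A j) (lap_down k A (j+1)) \<mu>"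
  shows "\<exists>t. k - j + 1 \<le> t \<and> t \<le> k + 1 \<and> \<mu> = real t * real n"
proof -
  obtain v where v: "v \<in> cobound k A j ` cochains k A j" "v \<noteq> 0" "lap_down k A (Suc j) v = cscale \<mu> v"
    using e by (auto simp: eigenvalue_on_def)
  obtain w where w: "w \<in> cochains k A j" "v = cobound k A j w" using v(1) by auto
  have lv: "lap k A (j+1) v = cscale \<mu> v" using v(3) w(2) lap_D by simp
  have "eigenvalue_on (cochains k A (j+1)) (lap k A (j+1)) \<mu>"
    unfolding eigenvalue_on_def using lv v(2) w(2) cobound_in by auto
  then obtain t where t: "k - j \<le> t" "t \<le> k + 1" "\<mu> = real t * real n" using part_i_eig[OF j] by blast
  show ?thesis
  proof (cases "k - j + 1 \<le> t")
    case True then show ?thesis using t by blast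
  next
    case False
    then have tkj: "t = k - j" using t(1) by simp
    show ?thesis
    proof (cases "t = 0")
      case True
      then have "lap_down k A (Suc j) v = 0" using v(3) t(3) by (simp add: cs.scale_zero_left)
      then have "v = 0" using lapdown_inj v(1) by blast
      then show ?thesis using v(2) by simp
    next
      case False
      have vU: "v \<in> Ud (real t * real n) j" using v t(3) by (simp add: Ud_def)
      have "cs.dim (Ud (real t * real n) j) \<noteq> 0"
        by (rule dim_pos[OF _ finite_span_cochains(2) vU v(2)]) (use Ud_sub Wm_fin in blast)
      moreover have "((t-1) choose (k-j)) = 0" using tkj False by (intro binomial_eq_0) simp
      ultimately show ?thesis using a_formula[OF j, of t] False by simp
    qed
  qed
qed

lemma part_ii_down_mult:
  assumes j: "j \<le> k" and t: "k - j + 1 \<le> t"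
  shows "eig_mult (cobound k A j ` cochains k A j) (lap_down k A (j+1)) (real t * real n)
           = (k+1 choose t) * ((t-1) choose (k-j)) * (n-1)^(k+1-t)"
  using a_formula[OF j, of t] t by (simp add: eig_mult_def Ud_def)

lemma part_ii_up_eig:
  assumes j: "j < k" and e: "eigenvalue_on (cobound_adj k A (j+1) ` cochains k A (j+2)) (lap_up k A (j+1)) \<mu>"
  shows "\<exists>t. k - j \<le> t \<and> t \<le> k + 1 \<and> \<mu> = real t * real n"
proof -
  obtain v where v: "v \<in> cobound_adj k A (j+1) ` cochains k A (j+2)" "v \<noteq> 0" "lap_up k A (Suc j) v = cscale \<mu> v"
    using e by (auto simp: eigenvalue_on_def)
  obtain w where w: "v = cobound_adj k A (Suc j) w" using v(1) by auto
  have lv: "lap k A (j+1) v = cscale \<mu> v" using v(3) w lap_Ds by simp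
  have "eigenvalue_on (cochains k A (j+1)) (lap k A (j+1)) \<mu>"
    unfolding eigenvalue_on_def using lv v(2) w cobound_adj_in by auto
  then show ?thesis using part_i_eig[of j \<mu>] j by simp
qed

lemma part_ii_up_mult:
  assumes j: "j < k" and t: "k - j \<le> t"
  shows "eig_mult (cobound_adj k A (j+1) ` cochains k A (j+2)) (lap_up k A (j+1)) (real t * real n)
           = (k+1 choose t) * ((t-1) choose (k-j-1)) * (n-1)^(k+1-t)"
proof -
  have "1 \<le> t" using j t by simp
  then show ?thesis using b_formula[OF j, of t] by (simp add: eig_mult_def Uu_def numeral_2_eq_2)
qed

end

theorem proposition3p2:
  fixes G :: "('a, 'b) monoid_scheme" and k n :: nat
  assumes "group G" and "finite (carrier G)" and "order G = n" and "k \<ge> 1"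
  shows
  \<comment> \<open>(i) L_j on C^j, 0 \<le> j \<le> k (faces with j+1 vertices)\<close>
   "(\<forall>j\<le>k.
      (\<forall>\<mu>. eigenvalue_on (cochains k (carrier G) (j+1)) (lap k (carrier G) (j+1)) \<mu>
              \<longrightarrow> (\<exists>t. k - j \<le> t \<and> t \<le> k + 1 \<and> \<mu> = real t * real n)) \<and>
      (\<forall>t. k - j \<le> t \<and> t \<le> k + 1 \<longrightarrow>
         eig_mult (cochains k (carrier G) (j+1)) (lap k (carrier G) (j+1)) (real t * real n)
           = (k+1 choose t) * (t choose (k-j)) * (n-1)^(k+1-t)))
   \<and>
  \<comment> \<open>(ii) L_j^- on im d_{j-1}, 0 \<le> j \<le> k\<close>
   (\<forall>j\<le>k.
      (\<forall>\<mu>. eigenvalue_on (cobound k (carrier G) j ` cochains k (carrier G) j)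
                (lap_down k (carrier G) (j+1)) \<mu>
              \<longrightarrow> (\<exists>t. k - j + 1 \<le> t \<and> t \<le> k + 1 \<and> \<mu> = real t * real n)) \<and>
      (\<forall>t. k - j + 1 \<le> t \<and> t \<le> k + 1 \<longrightarrow>
         eig_mult (cobound k (carrier G) j ` cochains k (carrier G) j)
           (lap_down k (carrier G) (j+1)) (real t * real n)
           = (k+1 choose t) * ((t-1) choose (k-j)) * (n-1)^(k+1-t)))
   \<and>
  \<comment> \<open>(ii) L_j^+ on im d_j^*, 0 \<le> j \<le> k-1\<close>
   (\<forall>j<k.
      (\<forall>\<mu>. eigenvalue_on (cobound_adj k (carrier G) (j+1) ` cochains k (carrier G) (j+2))
                (lap_up k (carrier G) (j+1)) \<mu>
              \<longrightarrow> (\<exists>t. k - j \<le> t \<and> t \<le> k + 1 \<and> \<mu> = real t * real n)) \<and>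
      (\<forall>t. k - j \<le> t \<and> t \<le> k + 1 \<longrightarrow>
         eig_mult (cobound_adj k (carrier G) (j+1) ` cochains k (carrier G) (j+2))
           (lap_up k (carrier G) (j+1)) (real t * real n)
           = (k+1 choose t) * ((t-1) choose (k-j-1)) * (n-1)^(k+1-t)))"
  proof -
  have fin: "finite (carrier G)" using assms(2) .
  have ne: "carrier G \<noteq> {}" using monoid.one_closed[OF group.is_monoid[OF assms(1)]] by blast
  interpret Y: YG k "carrier G" by unfold_locales (use fin ne in auto)
  have cn: "card (carrier G) = n" using assms(3) by (simp add: order_def)
  have P1: "\<forall>j\<le>k.
      (\<forall>\<mu>. eigenvalue_on (cochains k (carrier G) (j+1)) (lap k (carrier G) (j+1)) \<mu>
              \<longrightarrow> (\<exists>t. k - j \<le> t \<and> t \<le> k + 1 \<and> \<mu> = real t * real n)) \<and>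
      (\<forall>t. k - j \<le> t \<and> t \<le> k + 1 \<longrightarrow>
         eig_mult (cochains k (carrier G) (j+1)) (lap k (carrier G) (j+1)) (real t * real n)
           = (k+1 choose t) * (t choose (k-j)) * (n-1)^(k+1-t))"
    using Y.part_i_eig Y.part_i_count Y.part_i_formula cn by auto
  have P2: "\<forall>j\<le>k.
      (\<forall>\<mu>. eigenvalue_on (cobound k (carrier G) j ` cochains k (carrier G) j)
                (lap_down k (carrier G) (j+1)) \<mu>
              \<longrightarrow> (\<exists>t. k - j + 1 \<le> t \<and> t \<le> k + 1 \<and> \<mu> = real t * real n)) \<and>
      (\<forall>t. k - j + 1 \<le> t \<and> t \<le> k + 1 \<longrightarrow>
         eig_mult (cobound k (carrier G) j ` cochains k (carrier G) j)
           (lap_down k (carrier G) (j+1)) (real t * real n)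
           = (k+1 choose t) * ((t-1) choose (k-j)) * (n-1)^(k+1-t))"
    using Y.part_ii_down_eig Y.part_ii_down_mult cn by auto
  have P3: "\<forall>j<k.
      (\<forall>\<mu>. eigenvalue_on (cobound_adj k (carrier G) (j+1) ` cochains k (carrier G) (j+2))
                (lap_up k (carrier G) (j+1)) \<mu>
              \<longrightarrow> (\<exists>t. k - j \<le> t \<and> t \<le> k + 1 \<and> \<mu> = real t * real n)) \<and>
      (\<forall>t. k - j \<le> t \<and> t \<le> k + 1 \<longrightarrow>
         eig_mult (cobound_adj k (carrier G) (j+1) ` cochains k (carrier G) (j+2))
           (lap_up k (carrier G) (j+1)) (real t * real n)
           = (k+1 choose t) * ((t-1) choose (k-j-1)) * (n-1)^(k+1-t))"
    using Y.part_ii_up_eig Y.part_ii_up_mult cn by auto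
  show ?thesis using P1 P2 P3 by blast
qed

end
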